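(* Let $k\ge 4$ be an even integer. If $\Gamma\in M_{0,1,2,\ldots,k-2,k-1}$, then $\Gamma$ has a Fulkerson-cover.
   Context: All graphs are finite. A Fulkerson-cover of a cubic graph is a collection of six perfect matchings such that every edge belongs to exactly two of them. A cubic graph is cyclically 4-edge-connected if at least 4 edges must be removed to disconnect it into two components each containing a circuit. The family $M_{0,1,\ldots,k-1}$ ($k\ge 2$): Let $G_0,G_1,\ldots,G_{k-1}$ be bridgeless, cyclically 4-edge-connected cubic graphs, each having a Fulkerson-cover. In each $G_i$ choose an edge $x_iy_i$, let $x_i^0,x_i^1$ be the two neighbours of $x_i$ other than $y_i$, let $y_i^0,y_i^1$ be the two neighbours of $y_i$ other than $x_i$, and let $H_i=G_i\setminus\{x_i,y_i\}$ (delete the two vertices and their incident edges). The graph $\{G;G_0,\ldots,G_{k-1}\}$ is obtained from the disjoint union of $H_0,\ldots,H_{k-1}$ by adding new vertices $a_j,b_j,c_j$ for $0\le j\le k-1$ and $v_0,\ldots,v_{k-3}$ (none if $k=2$), and the following edges, with indices of $x$ taken modulo $k$: - for each $0\le j\le k-1$: $a_jy_j^0$, $a_jx_{j+1}^0$, $b_jy_j^1$, $b_jx_{j+1}^1$, $a_jc_j$, $b_jc_j$; - the edges of the path $c_1v_0v_1\cdots v_{k-3}c_0$ (for $k=2$ this is the single edge $c_0c_1$); - for each $2\le i\le k-1$: the edge $c_iv_{i-2}$. (Equivalently, it is built recursively: for $k=2$ take the graph above with edge $c_0c_1$; for $i=3,\ldots,k$, add $H_{i-1}$ and $a_{i-1},b_{i-1},c_{i-1}$,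 subdivide the edge at $c_0$ not of the form $a_0c_0,b_0c_0$ by a new vertex $v_{i-3}$, join $c_{i-1}$ to $a_{i-1},b_{i-1},v_{i-3}$, make $a_{i-1}$ adjacent to $x_0^0,y_{i-1}^0$, $b_{i-1}$ adjacent to $x_0^1,y_{i-1}^1$, and replace the edges $a_{i-2}x_0^0$, $b_{i-2}x_0^1$ by $a_{i-2}x_{i-1}^0$, $b_{i-2}x_{i-1}^1$.) $M_{0,1,\ldots,k-1}$ denotes the set of all graphs obtained this way, over all such choices of $G_i$, edges $x_iy_i$ and labelings of neighbours. *)

theory Defs
  imports Main
begin

definition graph :: "'a set \<Rightarrow> 'a set set \<Rightarrow> bool" where
  "graph V E \<longleftrightarrow> finite V \<and> (\<forall>e\<in>E. \<exists>u v. u \<noteq> v \<and> u \<in> V \<and> v \<in> V \<and> e = {u, v})"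

definition degree :: "'a set set \<Rightarrow> 'a \<Rightarrow> nat" where
  "degree E v = card {e \<in> E. v \<in> e}"

definition cubic :: "'a set \<Rightarrow> 'a set set \<Rightarrow> bool" where
  "cubic V E \<longleftrightarrow> graph V E \<and> (\<forall>v\<in>V. degree E v = 3)"

definition perfect_matching :: "'a set \<Rightarrow> 'a set set \<Rightarrow> 'a set set \<Rightarrow> bool" where
  "perfect_matching V E M \<longleftrightarrow> M \<subseteq> E \<and> (\<forall>v\<in>V. \<exists>!e. e \<in> M \<and> v \<in> e)"

definition has_fulkerson_cover :: "'a set \<Rightarrow> 'a set set \<Rightarrow> bool" where
  "has_fulkerson_cover V E \<longleftrightarrow>
     (\<exists>M :: nat \<Rightarrow> 'a set set. (\<forall>i<6. perfect_matching V E (M i)) \<and>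
        (\<forall>e\<in>E. card {i. i < 6 \<and> e \<in> M i} = 2))"

definition connected_in :: "'a set set \<Rightarrow> 'a \<Rightarrow> 'a \<Rightarrow> bool" where
  "connected_in F u v \<longleftrightarrow> (u, v) \<in> {(p, q). {p, q} \<in> F}\<^sup>*"

definition bridgeless :: "'a set \<Rightarrow> 'a set set \<Rightarrow> bool" where
  "bridgeless V E \<longleftrightarrow> (\<forall>u v. {u, v} \<in> E \<longrightarrow> connected_in (E - {{u, v}}) u v)"

definition has_circuit :: "'a set set \<Rightarrow> bool" where
  "has_circuit F \<longleftrightarrow> (\<exists>vs. length vs \<ge> 3 \<and> distinct vs \<and>
      (\<forall>i<length vs. {vs ! i, vs ! ((i + 1) mod length vs)} \<in> F))"

definition induced_edges :: "'a set set \<Rightarrow> 'a set \<Rightarrow> 'a set set" where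
  "induced_edges E S = {e \<in> E. e \<subseteq> S}"

definition cut_edges :: "'a set set \<Rightarrow> 'a set \<Rightarrow> 'a set set" where
  "cut_edges E S = {e \<in> E. e \<inter> S \<noteq> {} \<and> e - S \<noteq> {}}"

definition cyclically_4_edge_connected :: "'a set \<Rightarrow> 'a set set \<Rightarrow> bool" where
  "cyclically_4_edge_connected V E \<longleftrightarrow>
     (\<forall>S \<subseteq> V. has_circuit (induced_edges E S) \<and> has_circuit (induced_edges E (V - S))
        \<longrightarrow> card (cut_edges E S) \<ge> 4)"

datatype 'a mv = Hv nat 'a | A nat | B nat | C nat | Vv nat

definition cpath :: "nat \<Rightarrow> 'a mv list" where
  "cpath k = [C 1] @ map Vv [0..<k - 2] @ [C 0]"

definition constr_vertices ::
  "nat \<Rightarrow> (nat \<Rightarrow> 'a set) \<Rightarrow> (nat \<Rightarrow> 'a) \<Rightarrow> (nat \<Rightarrow> 'a) \<Rightarrow> 'a mv set" where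
  "constr_vertices k V x y =
     {Hv i u | i u. i < k \<and> u \<in> V i - {x i, y i}}
     \<union> {A j | j. j < k} \<union> {B j | j. j < k} \<union> {C j | j. j < k} \<union> {Vv j | j. j + 2 < k}"

definition constr_edges ::
  "nat \<Rightarrow> (nat \<Rightarrow> 'a set set) \<Rightarrow> (nat \<Rightarrow> 'a) \<Rightarrow> (nat \<Rightarrow> 'a) \<Rightarrow>
   (nat \<Rightarrow> 'a) \<Rightarrow> (nat \<Rightarrow> 'a) \<Rightarrow> (nat \<Rightarrow> 'a) \<Rightarrow> (nat \<Rightarrow> 'a) \<Rightarrow> 'a mv set set" where
  "constr_edges k E x y x0 x1 y0 y1 =
     {{Hv i u, Hv i w} | i u w. i < k \<and> {u, w} \<in> E i \<and> x i \<notin> {u, w} \<and> y i \<notin> {u, w}}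
     \<union> (\<Union>j\<in>{..<k}.
          {{A j, Hv j (y0 j)}, {A j, Hv (Suc j mod k) (x0 (Suc j mod k))},
           {B j, Hv j (y1 j)}, {B j, Hv (Suc j mod k) (x1 (Suc j mod k))},
           {A j, C j}, {B j, C j}})
     \<union> {{(cpath k :: 'a mv list) ! i, cpath k ! Suc i} | i. Suc i < length (cpath k :: 'a mv list)}
     \<union> {{C i, Vv (i - 2)} | i. 2 \<le> i \<and> i < k}"

definition admissible_piece ::
  "'a set \<Rightarrow> 'a set set \<Rightarrow> 'a \<Rightarrow> 'a \<Rightarrow> 'a \<Rightarrow> 'a \<Rightarrow> 'a \<Rightarrow> 'a \<Rightarrow> bool" where
  "admissible_piece V E x y x0 x1 y0 y1 \<longleftrightarrow>
     cubic V E \<and> bridgeless V E \<and> cyclically_4_edge_connected V E \<and> has_fulkerson_cover V E \<and>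
     {x, y} \<in> E \<and>
     x0 \<noteq> x1 \<and> {x, x0} \<in> E \<and> {x, x1} \<in> E \<and> x0 \<noteq> y \<and> x1 \<noteq> y \<and>
     y0 \<noteq> y1 \<and> {y, y0} \<in> E \<and> {y, y1} \<in> E \<and> y0 \<noteq> x \<and> y1 \<noteq> x"

text \<open>The family M_{0,1,...,k-1}, realised on the concrete vertex type 'a mv.\<close>
definition M_family :: "nat \<Rightarrow> ('a mv set \<times> 'a mv set set) set" where
  "M_family k = {(constr_vertices k V x y, constr_edges k E x y x0 x1 y0 y1) |
       V E x y x0 x1 y0 y1.
       (\<forall>i<k. admissible_piece (V i) (E i) (x i) (y i) (x0 i) (x1 i) (y0 i) (y1 i))}"

end

theory Submission
  imports Defs
begin


lemma edge_facts:
  assumes "graph V E" "{a, b} \<in> E"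
  shows "a \<noteq> b \<and> a \<in> V \<and> b \<in> V"
  using assms unfolding graph_def by (auto simp: doubleton_eq_iff)

lemma three_edges:
  assumes "cubic V E" "v \<in> V" "e1 \<in> E" "e2 \<in> E" "e3 \<in> E" "v \<in> e1" "v \<in> e2" "v \<in> e3"
    "e1 \<noteq> e2" "e1 \<noteq> e3" "e2 \<noteq> e3"
  shows "{e\<in>E. v\<in>e} = {e1,e2,e3}"
proof -
  have c: "card {e\<in>E. v\<in>e} = 3" using assms(1,2) unfolding cubic_def degree_def by auto
  hence f: "finite {e\<in>E. v\<in>e}" by (metis card.infinite zero_neq_numeral)
  have s: "{e1,e2,e3} \<subseteq> {e\<in>E. v\<in>e}" using assms by auto
  have "card {e1,e2,e3} = 3" using assms by auto
  thus ?thesis using card_subset_eq[OF f s] c by simp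
qed

lemma card_pre_bij:
  assumes "bij_betw \<tau> {..<6::nat} {..<6::nat}" "S \<subseteq> {..<6}"
  shows "card {m. m < 6 \<and> \<tau> m \<in> S} = card S"
proof -
  have "bij_betw \<tau> {m. m < 6 \<and> \<tau> m \<in> S} S"
    using assms unfolding bij_betw_def inj_on_def by (auto simp: image_iff)
  thus ?thesis by (rule bij_betw_same_card)
qed

lemma mk_perm:
  assumes "distinct ls" "distinct os" "length ls = length os" "set ls = SA" "set os = SB"
  shows "\<exists>\<tau>. bij_betw \<tau> SA SB \<and> (\<forall>i<length ls. \<tau> (ls!i) = os!i)"
proof -
  define \<tau> where "\<tau> = (\<lambda>z. the (map_of (zip ls os) z))"
  have t: "\<forall>i<length ls. \<tau> (ls!i) = os!i"
    using map_of_zip_nth[OF assms(3,1)] assms(3) unfolding \<tau>_def by simp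
  have "bij_betw \<tau> SA SB"
    unfolding bij_betw_def inj_on_def
  proof (intro conjI ballI impI)
    fix a b assume "a \<in> SA" "b \<in> SA" "\<tau> a = \<tau> b"
    then obtain i j where "i < length ls" "j < length ls" "a = ls!i" "b = ls!j"
      using assms(4) by (metis in_set_conv_nth)
    thus "a = b" using t \<open>\<tau> a = \<tau> b\<close> assms(2,3) by (metis nth_eq_iff_index_eq)
  next
    show "\<tau> ` SA = SB"
    proof
      show "\<tau> ` SA \<subseteq> SB" using t assms(3,4,5) by (auto simp: in_set_conv_nth) (metis nth_mem)
      show "SB \<subseteq> \<tau> ` SA" using t assms(3,4,5) by (auto simp: in_set_conv_nth image_iff) (metis nth_mem)
    qed
  qed
  thus ?thesis using t by blast
qed

lemma six_full:
  assumes "distinct (xs::nat list)" "length xs = 6" "set xs \<subseteq> {..<6}"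
  shows "set xs = {..<6}"
proof -
  have "card (set xs) = 6" using assms distinct_card by metis
  thus ?thesis using assms card_subset_eq[of "{..<6::nat}" "set xs"] by simp
qed



definition part3 :: "nat set \<Rightarrow> nat set \<Rightarrow> nat set \<Rightarrow> bool" where
  "part3 P Q R \<longleftrightarrow> P \<union> Q \<union> R = {..<6} \<and> P \<inter> Q = {} \<and> P \<inter> R = {} \<and> Q \<inter> R = {}
     \<and> card P = 2 \<and> card Q = 2 \<and> card R = 2"

lemma part3_R:
  assumes "part3 P Q R" shows "z \<in> R \<longleftrightarrow> z < 6 \<and> z \<notin> P \<and> z \<notin> Q"
  using assms unfolding part3_def by auto

lemma card2_ne: "card S = 2 \<Longrightarrow> \<exists>z. z \<in> S"
  by (metis card.empty ex_in_conv zero_neq_numeral)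

lemma card2_other: "card S = 2 \<Longrightarrow> q \<in> S \<Longrightarrow> \<exists>z. z \<in> S \<and> z \<noteq> q"
  by (metis card_2_iff insert_iff)

lemma sub_card_eq:
  assumes "card X = 2" "card Y = 2" "X \<subseteq> Y" shows "X = Y"
  using assms by (metis card_subset_eq card.infinite zero_neq_numeral)

lemma part3_cases:
  assumes "part3 P Q R" "part3 P Q' R'"
  shows "Q' = Q \<or> Q' = R \<or> (Q' \<inter> Q \<noteq> {} \<and> Q' \<inter> R \<noteq> {})"
proof -
  have s: "Q' \<subseteq> Q \<union> R" using assms unfolding part3_def by blast
  { assume "Q' \<inter> R = {}" hence "Q' \<subseteq> Q" using s by blast
    hence "Q' = Q" using assms sub_card_eq unfolding part3_def by metis }
  moreover
  { assume "Q' \<inter> Q = {}" hence "Q' \<subseteq> R" using s by blast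
    hence "Q' = R" using assms sub_card_eq unfolding part3_def by metis }
  ultimately show ?thesis by blast
qed

lemma WE:
  assumes "part3 P Q R" "part3 P Q' R'"
  shows "\<exists>u v. u \<in> R \<and> v \<in> Q \<and> (if Q' = Q then v \<in> Q' \<and> u \<in> R' else u \<in> Q' \<and> v \<in> R')"
proof (cases "Q' = Q")
  case True
  have cs: "card Q = 2" "card R = 2" using assms unfolding part3_def by auto
  obtain u where u: "u \<in> R" using card2_ne[OF cs(2)] by blast
  obtain v where v: "v \<in> Q" using card2_ne[OF cs(1)] by blast
  have "u < 6 \<and> u \<notin> P \<and> u \<notin> Q" using u part3_R[OF assms(1)] by blast
  hence "u \<in> R'" using True part3_R[OF assms(2)] by simp
  thus ?thesis using True u v by auto
next
  case False
  have cs: "card Q = 2" "card R = 2" "card Q' = 2" "card R' = 2" using assms unfolding part3_def by auto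
  have s: "Q' \<subseteq> Q \<union> R" using assms unfolding part3_def by blast
  have 1: "R \<inter> Q' \<noteq> {}"
  proof
    assume "R \<inter> Q' = {}" hence "Q' \<subseteq> Q" using s by blast
    hence "Q' = Q" using cs sub_card_eq by metis
    thus False using False by simp
  qed
  have s2: "R' \<subseteq> Q \<union> R" using assms unfolding part3_def by blast
  have 2: "Q \<inter> R' \<noteq> {}"
  proof
    assume "Q \<inter> R' = {}" hence "R' \<subseteq> R" using s2 by blast
    hence "R' = R" using cs sub_card_eq by metis
    have "Q' = Q"
    proof
      show "Q' \<subseteq> Q" using part3_R[OF assms(2)] \<open>R' = R\<close> s by blast
      show "Q \<subseteq> Q'" using part3_R[OF assms(2)] \<open>R' = R\<close> assms(1) unfolding part3_def by blast
    qed
    thus False using False by simp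
  qed
  from 1 2 obtain u v where "u \<in> R \<inter> Q'" "v \<in> Q \<inter> R'" by blast
  thus ?thesis using False by auto
qed

lemma WC:
  assumes "part3 P Q R" "part3 P Q' R'"
  shows "\<exists>u v w1 w2. u \<in> R \<and> v \<in> Q \<and> w1 \<in> Q' \<and> w2 \<in> R' \<and> distinct [u,v,w1,w2]"
proof -
  have QR: "Q \<inter> R = {}" using assms unfolding part3_def by blast
  obtain q1 q2 where q: "Q = {q1,q2}" "q1 \<noteq> q2" using assms unfolding part3_def by (metis card_2_iff)
  obtain r1 r2 where r: "R = {r1,r2}" "r1 \<noteq> r2" using assms unfolding part3_def by (metis card_2_iff)
  have d: "q1 \<noteq> r1" "q1 \<noteq> r2" "q2 \<noteq> r1" "q2 \<noteq> r2" using QR q r by auto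
  consider "Q' = Q" | "Q' = R" | "Q' \<inter> Q \<noteq> {} \<and> Q' \<inter> R \<noteq> {}" using part3_cases[OF assms] by blast
  thus ?thesis
  proof cases
    case 1
    hence "R' = R" using part3_R[OF assms(1)] part3_R[OF assms(2)] by auto
    hence "r1 \<in> R \<and> q1 \<in> Q \<and> q2 \<in> Q' \<and> r2 \<in> R' \<and> distinct [r1,q1,q2,r2]"
      using 1 q r d by simp
    thus ?thesis by (intro exI)
  next
    case 2
    hence "R' = Q" using assms unfolding part3_def by blast
    hence "r1 \<in> R \<and> q1 \<in> Q \<and> r2 \<in> Q' \<and> q2 \<in> R' \<and> distinct [r1,q1,r2,q2]"
      using 2 q r d by simp
    thus ?thesis by (intro exI)
  next
    case 3
    then obtain qq rr where qq: "qq \<in> Q'" "qq \<in> Q" and rr: "rr \<in> Q'" "rr \<in> R" by blast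
    have "qq \<noteq> rr" using qq rr QR by blast
    have cs: "card Q = 2" "card R = 2" "card Q' = 2" using assms unfolding part3_def by auto
    have "{qq, rr} = Q'" using sub_card_eq[of "{qq,rr}" Q'] cs(3) \<open>qq \<noteq> rr\<close> qq rr by simp
    hence Q': "Q' = {qq, rr}" by simp
    obtain qb where qb: "qb \<in> Q" "qb \<noteq> qq" using card2_other[OF cs(1) qq(2)] by blast
    obtain rb where rb: "rb \<in> R" "rb \<noteq> rr" using card2_other[OF cs(2) rr(2)] by blast
    have pq: "P \<inter> Q = {}" "Q \<subseteq> {..<6}" using assms(1) unfolding part3_def by auto
    have "qb < 6 \<and> qb \<notin> P \<and> qb \<notin> Q'" using qb Q' QR rr pq by auto
    hence qbR: "qb \<in> R'" using part3_R[OF assms(2)] by blast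
    have "rb \<notin> Q" "rr \<notin> Q" using QR rb rr by blast+
    have "rb \<in> R \<and> qq \<in> Q \<and> rr \<in> Q' \<and> qb \<in> R' \<and> distinct [rb,qq,rr,qb]"
      using qbR qb rb qq rr \<open>qq \<noteq> rr\<close> \<open>rb \<notin> Q\<close> \<open>rr \<notin> Q\<close> by auto
    thus ?thesis by (intro exI)
  qed
qed



lemma rest2:
  assumes "distinct [a,b,c,d::nat]" "a < 6" "b < 6" "c < 6" "d < 6"
  shows "\<exists>w1 w2. distinct [a,b,c,d,w1,w2] \<and> w1 < 6 \<and> w2 < 6"
proof -
  have sub: "{a,b,c,d} \<subseteq> {..<6::nat}" using assms by auto
  have c4: "card {a,b,c,d} = 4" using assms(1) by simp
  have "card ({..<6} - {a,b,c,d}) = 2" using card_Diff_subset[OF _ sub] c4 by simp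
  then obtain w1 w2 where "{..<6} - {a,b,c,d} = {w1,w2}" "w1 \<noteq> w2" by (metis card_2_iff)
  hence "w1 \<in> {..<6} - {a,b,c,d}" "w2 \<in> {..<6} - {a,b,c,d}" by auto
  thus ?thesis using assms(1) \<open>w1 \<noteq> w2\<close> by auto
qed

lemma perm6:
  assumes "distinct [l1,l2,l3,l4,l5,l6]" "set [l1,l2,l3,l4,l5,l6] = {..<6::nat}"
    "distinct [o1,o2,o3,o4,o5,o6]" "set [o1,o2,o3,o4,o5,o6] \<subseteq> {..<6::nat}"
  shows "\<exists>\<tau>. bij_betw \<tau> {..<6} {..<6} \<and> \<tau> l1 = o1 \<and> \<tau> l2 = o2 \<and> \<tau> l3 = o3 \<and> \<tau> l4 = o4
     \<and> \<tau> l5 = o5 \<and> \<tau> l6 = o6"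
proof -
  have so: "set [o1,o2,o3,o4,o5,o6] = {..<6}" using six_full[OF assms(3) _ assms(4)] by simp
  obtain \<tau> where t: "bij_betw \<tau> {..<6} {..<6}"
    "\<forall>i<length [l1,l2,l3,l4,l5,l6]. \<tau> ([l1,l2,l3,l4,l5,l6]!i) = [o1,o2,o3,o4,o5,o6]!i"
    using mk_perm[OF assms(1) assms(3) _ assms(2) so] by auto
  have "\<tau> l1 = o1" using t(2)[rule_format, of 0] by simp
  moreover have "\<tau> l2 = o2" using t(2)[rule_format, of 1] by simp
  moreover have "\<tau> l3 = o3" using t(2)[rule_format, of 2] by simp
  moreover have "\<tau> l4 = o4" using t(2)[rule_format, of 3] by simp
  moreover have "\<tau> l5 = o5" using t(2)[rule_format, of 4] by simp
  moreover have "\<tau> l6 = o6" using t(2)[rule_format, of 5] by simp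
  ultimately show ?thesis using t(1) by blast
qed

lemma LE:
  fixes l1 l2 l3 l4 l5 l6 :: nat
  assumes "part3 P Q R" "part3 P Q' R'" "distinct [l1,l2,l3,l4,l5,l6]" "set [l1,l2,l3,l4,l5,l6] = {..<6}"
  shows "\<exists>\<tau>. bij_betw \<tau> {..<6} {..<6} \<and> \<tau> l1 \<in> P \<and> \<tau> l2 \<in> P \<and> \<tau> l3 \<in> R \<and> \<tau> l4 \<in> Q
     \<and> \<tau> (if Q' = Q then l4 else l3) \<in> Q' \<and> \<tau> (if Q' = Q then l3 else l4) \<in> R'"
proof -
  have p: "P \<union> Q \<union> R = {..<6}" "P \<inter> Q = {}" "P \<inter> R = {}" "Q \<inter> R = {}" "card P = 2"
    using assms(1) unfolding part3_def by auto
  obtain p1 p2 where pp: "P = {p1,p2}" "p1 \<noteq> p2" using p(5) by (metis card_2_iff)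
  obtain u v where uv: "u \<in> R" "v \<in> Q" "if Q' = Q then v \<in> Q' \<and> u \<in> R' else u \<in> Q' \<and> v \<in> R'"
    using WE[OF assms(1,2)] by blast
  have "distinct [p1,p2,u,v]" using uv(1,2) pp p(2,3,4) by auto
  moreover have "p1 < 6" "p2 < 6" "u < 6" "v < 6" using uv(1,2) pp p(1) by auto
  ultimately obtain w1 w2 where w: "distinct [p1,p2,u,v,w1,w2]" "w1 < 6" "w2 < 6"
    using rest2 by blast
  have "set [p1,p2,u,v,w1,w2] \<subseteq> {..<6}" using w \<open>p1 < 6\<close> \<open>p2 < 6\<close> \<open>u < 6\<close> \<open>v < 6\<close> by auto
  then obtain \<tau> where t: "bij_betw \<tau> {..<6} {..<6}" "\<tau> l1 = p1" "\<tau> l2 = p2" "\<tau> l3 = u" "\<tau> l4 = v"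
    using perm6[OF assms(3,4) w(1)] by blast
  show ?thesis using t uv pp by (intro exI[of _ \<tau>]) (auto split: if_splits)
qed

lemma LC:
  fixes l1 l2 l3 l4 l5 l6 :: nat
  assumes "part3 P Q R" "part3 P Q' R'" "distinct [l1,l2,l3,l4,l5,l6]" "set [l1,l2,l3,l4,l5,l6] = {..<6}"
  shows "\<exists>\<tau>. bij_betw \<tau> {..<6} {..<6} \<and> \<tau> l1 \<in> P \<and> \<tau> l2 \<in> P \<and> \<tau> l3 \<in> R \<and> \<tau> l4 \<in> Q
     \<and> \<tau> l5 \<in> Q' \<and> \<tau> l6 \<in> R'"
proof -
  have p: "P \<union> Q \<union> R = {..<6}" "P \<inter> Q = {}" "P \<inter> R = {}" "Q \<inter> R = {}" "card P = 2"
    using assms(1) unfolding part3_def by auto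
  have p2: "P \<union> Q' \<union> R' = {..<6}" "P \<inter> Q' = {}" "P \<inter> R' = {}"
    using assms(2) unfolding part3_def by auto
  obtain p1 p2 where pp: "P = {p1,p2}" "p1 \<noteq> p2" using p(5) by (metis card_2_iff)
  obtain u v w1 w2 where uv: "u \<in> R" "v \<in> Q" "w1 \<in> Q'" "w2 \<in> R'" "distinct [u,v,w1,w2]"
    using WC[OF assms(1,2)] by blast
  have "p1 \<notin> R" "p1 \<notin> Q" "p1 \<notin> Q'" "p1 \<notin> R'" "p2 \<notin> R" "p2 \<notin> Q" "p2 \<notin> Q'" "p2 \<notin> R'"
    using pp p p2 by auto
  hence d: "distinct [p1,p2,u,v,w1,w2]" using uv pp by auto
  have "set [p1,p2,u,v,w1,w2] \<subseteq> {..<6}" using uv pp p p2 by auto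
  then obtain \<tau> where t: "bij_betw \<tau> {..<6} {..<6}" "\<tau> l1 = p1" "\<tau> l2 = p2" "\<tau> l3 = u" "\<tau> l4 = v"
    "\<tau> l5 = w1" "\<tau> l6 = w2"
    using perm6[OF assms(3,4) d] by blast
  show ?thesis using t uv pp by (intro exI[of _ \<tau>]) auto
qed



lemma bij_pre:
  assumes "bij_betw \<tau> {..<6::nat} {..<6::nat}" "\<tau> ` P \<subseteq> p" "card P = 2" "card p = 2"
    "P \<subseteq> {..<6}" "m < 6" "\<tau> m \<in> p"
  shows "m \<in> P"
proof -
  have inj: "inj_on \<tau> {..<6}" using assms(1) bij_betw_def by blast
  have "card (\<tau> ` P) = 2" using card_image[OF inj_on_subset[OF inj assms(5)]] assms(3) by simp
  hence "\<tau> ` P = p" using sub_card_eq[OF _ assms(4) assms(2)] by simp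
  then obtain m' where "m' \<in> P" "\<tau> m' = \<tau> m" using assms(7) by auto
  thus ?thesis using inj assms(5,6) unfolding inj_on_def by auto
qed

lemma junction:
  fixes \<tau>1 \<tau>2 :: "nat \<Rightarrow> nat"
  assumes b1: "bij_betw \<tau>1 {..<6} {..<6}" and b2: "bij_betw \<tau>2 {..<6} {..<6}"
    and pt1: "part3 p1 Q1 R1" and pt2: "part3 p2 Q2 R2" and pt: "part3 P1 P2 W"
    and i1: "\<tau>1 ` P1 \<subseteq> p1" and i2: "\<tau>2 ` P2 \<subseteq> p2"
    and bW: "b \<in> W" "b' \<in> W" "b \<noteq> b'"
    and c1: "\<tau>1 b \<in> Q1" "\<tau>1 b' \<in> R1" and c2: "\<tau>2 b \<in> R2" "\<tau>2 b' \<in> Q2"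
    and m: "m < 6"
  shows "\<not> (\<tau>1 m \<in> Q1 \<and> \<tau>2 m \<in> Q2)" "\<not> (\<tau>1 m \<in> R1 \<and> \<tau>2 m \<in> R2)"
    "((\<tau>1 m \<notin> Q1 \<and> \<tau>2 m \<notin> Q2) \<or> (\<tau>1 m \<notin> R1 \<and> \<tau>2 m \<notin> R2) \<or> m \<in> W)
     \<and> \<not> ((\<tau>1 m \<notin> Q1 \<and> \<tau>2 m \<notin> Q2) \<and> (\<tau>1 m \<notin> R1 \<and> \<tau>2 m \<notin> R2))
     \<and> \<not> ((\<tau>1 m \<notin> Q1 \<and> \<tau>2 m \<notin> Q2) \<and> m \<in> W)
     \<and> \<not> ((\<tau>1 m \<notin> R1 \<and> \<tau>2 m \<notin> R2) \<and> m \<in> W)"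
proof -
  have p1: "p1 \<union> Q1 \<union> R1 = {..<6}" "p1 \<inter> Q1 = {}" "p1 \<inter> R1 = {}" "Q1 \<inter> R1 = {}" "card p1 = 2"
    using pt1 unfolding part3_def by auto
  have p2: "p2 \<union> Q2 \<union> R2 = {..<6}" "p2 \<inter> Q2 = {}" "p2 \<inter> R2 = {}" "Q2 \<inter> R2 = {}" "card p2 = 2"
    using pt2 unfolding part3_def by auto
  have pp: "P1 \<union> P2 \<union> W = {..<6}" "P1 \<inter> P2 = {}" "P1 \<inter> W = {}" "P2 \<inter> W = {}" "card P1 = 2"
    "card P2 = 2" "card W = 2"
    using pt unfolding part3_def by auto
  have "{b, b'} = W" using sub_card_eq[of "{b,b'}" W] bW pp(7) by simp
  hence W: "W = {b, b'}" by simp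
  have t1: "\<tau>1 m < 6" "\<tau>2 m < 6" using m b1 b2 unfolding bij_betw_def by auto
  have e1: "\<tau>1 m \<in> p1 \<Longrightarrow> m \<in> P1" using bij_pre[OF b1 i1 pp(5) p1(5) _ m] pp(1) by blast
  have e2: "\<tau>2 m \<in> p2 \<Longrightarrow> m \<in> P2" using bij_pre[OF b2 i2 pp(6) p2(5) _ m] pp(1) by blast
  have f1: "m \<in> P1 \<Longrightarrow> \<tau>1 m \<in> p1" using i1 by auto
  have f2: "m \<in> P2 \<Longrightarrow> \<tau>2 m \<in> p2" using i2 by auto
  have dQR1: "\<tau>1 m \<in> p1 \<Longrightarrow> \<tau>1 m \<notin> Q1 \<and> \<tau>1 m \<notin> R1" "\<tau>1 m \<in> Q1 \<Longrightarrow> \<tau>1 m \<notin> R1"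
    using p1 by blast+
  have dQR2: "\<tau>2 m \<in> p2 \<Longrightarrow> \<tau>2 m \<notin> Q2 \<and> \<tau>2 m \<notin> R2" "\<tau>2 m \<in> Q2 \<Longrightarrow> \<tau>2 m \<notin> R2"
    using p2 by blast+
  have o1: "\<tau>1 m \<in> p1 \<or> \<tau>1 m \<in> Q1 \<or> \<tau>1 m \<in> R1" using t1 p1(1) by auto
  have o2: "\<tau>2 m \<in> p2 \<or> \<tau>2 m \<in> Q2 \<or> \<tau>2 m \<in> R2" using t1 p2(1) by auto
  have dis: "m \<in> P1 \<Longrightarrow> m \<notin> P2 \<and> m \<notin> W" "m \<in> P2 \<Longrightarrow> m \<notin> W" using pp by blast+
  have bb: "b \<notin> P1" "b \<notin> P2" "b' \<notin> P1" "b' \<notin> P2" using pp W by blast+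
  have "m \<in> P1 \<or> m \<in> P2 \<or> m = b \<or> m = b'" using m pp(1) W by auto
  hence "\<not> (\<tau>1 m \<in> Q1 \<and> \<tau>2 m \<in> Q2) \<and> \<not> (\<tau>1 m \<in> R1 \<and> \<tau>2 m \<in> R2) \<and>
    ((\<tau>1 m \<notin> Q1 \<and> \<tau>2 m \<notin> Q2) \<or> (\<tau>1 m \<notin> R1 \<and> \<tau>2 m \<notin> R2) \<or> m \<in> W)
     \<and> \<not> ((\<tau>1 m \<notin> Q1 \<and> \<tau>2 m \<notin> Q2) \<and> (\<tau>1 m \<notin> R1 \<and> \<tau>2 m \<notin> R2))
     \<and> \<not> ((\<tau>1 m \<notin> Q1 \<and> \<tau>2 m \<notin> Q2) \<and> m \<in> W)
     \<and> \<not> ((\<tau>1 m \<notin> R1 \<and> \<tau>2 m \<notin> R2) \<and> m \<in> W)"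
  proof (elim disjE)
    assume h: "m \<in> P1"
    have "\<tau>1 m \<in> p1" using f1 h by blast
    moreover have "\<tau>2 m \<notin> p2" using e2 dis(1) h by blast
    ultimately show ?thesis using dQR1 dQR2 o2 dis(1) h by blast
  next
    assume h: "m \<in> P2"
    have "\<tau>2 m \<in> p2" using f2 h by blast
    moreover have "\<tau>1 m \<notin> p1" using e1 pp(2) h by blast
    ultimately show ?thesis using dQR1 dQR2 o1 dis(2) h by blast
  next
    assume h: "m = b"
    thus ?thesis using c1 c2 dQR1 dQR2 bW W by blast
  next
    assume h: "m = b'"
    thus ?thesis using c1 c2 dQR1 dQR2 bW W by blast
  qed
  thus "\<not> (\<tau>1 m \<in> Q1 \<and> \<tau>2 m \<in> Q2)" "\<not> (\<tau>1 m \<in> R1 \<and> \<tau>2 m \<in> R2)"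
    "((\<tau>1 m \<notin> Q1 \<and> \<tau>2 m \<notin> Q2) \<or> (\<tau>1 m \<notin> R1 \<and> \<tau>2 m \<notin> R2) \<or> m \<in> W)
     \<and> \<not> ((\<tau>1 m \<notin> Q1 \<and> \<tau>2 m \<notin> Q2) \<and> (\<tau>1 m \<notin> R1 \<and> \<tau>2 m \<notin> R2))
     \<and> \<not> ((\<tau>1 m \<notin> Q1 \<and> \<tau>2 m \<notin> Q2) \<and> m \<in> W)
     \<and> \<not> ((\<tau>1 m \<notin> R1 \<and> \<tau>2 m \<notin> R2) \<and> m \<in> W)" by blast+
qed

lemma junction_card:
  fixes \<tau>1 \<tau>2 :: "nat \<Rightarrow> nat"
  assumes b1: "bij_betw \<tau>1 {..<6} {..<6}" and b2: "bij_betw \<tau>2 {..<6} {..<6}"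
    and c: "card Q1 = 2" "card Q2 = 2" "Q1 \<subseteq> {..<6}" "Q2 \<subseteq> {..<6}"
    and d: "\<forall>m<6. \<not> (\<tau>1 m \<in> Q1 \<and> \<tau>2 m \<in> Q2)"
  shows "card {m. m < 6 \<and> \<tau>1 m \<notin> Q1 \<and> \<tau>2 m \<notin> Q2} = 2"
proof -
  let ?A1 = "{m. m < 6 \<and> \<tau>1 m \<in> Q1}" and ?A2 = "{m. m < 6 \<and> \<tau>2 m \<in> Q2}"
  have a1: "card ?A1 = 2" using card_pre_bij[OF b1 c(3)] c(1) by simp
  have a2: "card ?A2 = 2" using card_pre_bij[OF b2 c(4)] c(2) by simp
  have "?A1 \<inter> ?A2 = {}" using d by auto
  hence u: "card (?A1 \<union> ?A2) = 4" using a1 a2 card_Un_disjoint[of ?A1 ?A2] by simp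
  have eq: "{m. m < 6 \<and> \<tau>1 m \<notin> Q1 \<and> \<tau>2 m \<notin> Q2} = {..<6} - (?A1 \<union> ?A2)" by auto
  have sub: "?A1 \<union> ?A2 \<subseteq> {..<6}" by auto
  have fin: "finite (?A1 \<union> ?A2)" by auto
  have "card ({..<6} - (?A1 \<union> ?A2)) = card {..<6::nat} - card (?A1 \<union> ?A2)"
    by (rule card_Diff_subset[OF fin sub])
  also have "\<dots> = 2" using u by simp
  finally show ?thesis unfolding eq .
qed



lemma part_vertex:
  assumes pm: "\<forall>z<6. perfect_matching V E (N z)" and cd: "\<forall>f\<in>E. card {z. z<6 \<and> f \<in> N z} = 2"
    and v: "v \<in> V" and ed: "{e\<in>E. v\<in>e} = {e1,e2,e3}" and d: "e1\<noteq>e2" "e1\<noteq>e3" "e2\<noteq>e3"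
  shows "part3 {z. z<6 \<and> e1 \<in> N z} {z. z<6 \<and> e2 \<in> N z} {z. z<6 \<and> e3 \<in> N z}"
proof -
  have inE: "e1 \<in> E" "e2 \<in> E" "e3 \<in> E" "v \<in> e1" "v \<in> e2" "v \<in> e3" using ed by blast+
  have ex: "\<And>z. z < 6 \<Longrightarrow> \<exists>!e. e \<in> N z \<and> v \<in> e" using pm v unfolding perfect_matching_def by blast
  have sub: "\<And>z. z < 6 \<Longrightarrow> N z \<subseteq> E" using pm unfolding perfect_matching_def by blast
  have un: "\<And>z. z < 6 \<Longrightarrow> e1 \<in> N z \<or> e2 \<in> N z \<or> e3 \<in> N z"
  proof -
    fix z :: nat assume z: "z < 6"
    then obtain e where "e \<in> N z" "v \<in> e" using ex by blast
    hence "e \<in> {e\<in>E. v\<in>e}" using sub[OF z] by blast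
    thus "e1 \<in> N z \<or> e2 \<in> N z \<or> e3 \<in> N z" using ed \<open>e \<in> N z\<close> by auto
  qed
  have dj: "\<And>z ea eb. z < 6 \<Longrightarrow> ea \<in> N z \<Longrightarrow> eb \<in> N z \<Longrightarrow> v \<in> ea \<Longrightarrow> v \<in> eb \<Longrightarrow> ea = eb"
    using ex by blast
  show ?thesis unfolding part3_def
  proof (intro conjI)
    show "{z. z < 6 \<and> e1 \<in> N z} \<union> {z. z < 6 \<and> e2 \<in> N z} \<union> {z. z < 6 \<and> e3 \<in> N z} = {..<6}"
      using un by auto
    show "{z. z < 6 \<and> e1 \<in> N z} \<inter> {z. z < 6 \<and> e2 \<in> N z} = {}" using dj inE d by blast
    show "{z. z < 6 \<and> e1 \<in> N z} \<inter> {z. z < 6 \<and> e3 \<in> N z} = {}" using dj inE d by blast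
    show "{z. z < 6 \<and> e2 \<in> N z} \<inter> {z. z < 6 \<and> e3 \<in> N z} = {}" using dj inE d by blast
    show "card {z. z < 6 \<and> e1 \<in> N z} = 2" "card {z. z < 6 \<and> e2 \<in> N z} = 2"
      "card {z. z < 6 \<and> e3 \<in> N z} = 2" using cd inE by auto
  qed
qed

fun gam :: "(nat \<Rightarrow> bool) \<Rightarrow> nat \<Rightarrow> nat" where
  "gam f 0 = 0"
| "gam f (Suc 0) = (if f 1 then 1 else 0)"
| "gam f (Suc (Suc 0)) = 4"
| "gam f (Suc (Suc (Suc n))) = (if f (Suc (Suc (Suc n))) then 9 - gam f (Suc (Suc n)) else gam f (Suc (Suc n)))"

lemma gam_ge2: "2 \<le> j \<Longrightarrow> gam f j = 4 \<or> gam f j = 5"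
proof (induction j rule: less_induct)
  case (less j)
  show ?case
  proof (cases "j = 2")
    case True thus ?thesis by (simp add: numeral_2_eq_2)
  next
    case False
    hence "3 \<le> j" using less.prems by simp
    hence "j = Suc (Suc (Suc (j - 3)))" by simp
    then obtain n where n: "j = Suc (Suc (Suc n))" by blast
    have "gam f (Suc (Suc n)) = 4 \<or> gam f (Suc (Suc n)) = 5" using less.IH[of "Suc (Suc n)"] n by simp
    thus ?thesis using n by auto
  qed
qed

lemma gam_step: "3 \<le> i \<Longrightarrow> gam f i = (if f i then 9 - gam f (i - 1) else gam f (i - 1))"
proof -
  assume "3 \<le> i"
  hence "i = Suc (Suc (Suc (i - 3)))" by simp
  then obtain n where "i = Suc (Suc (Suc n))" by blast
  thus ?thesis by simp
qed

lemma gam_01: "gam f 0 = 0" "gam f 1 = (if f 1 then 1 else 0)" "gam f 2 = 4"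
  by (simp_all add: numeral_2_eq_2)



locale Lc =
  fixes k :: nat and V :: "nat \<Rightarrow> 'a set" and E :: "nat \<Rightarrow> 'a set set"
    and x y x0 x1 y0 y1 :: "nat \<Rightarrow> 'a"
  assumes k4: "4 \<le> k" and kev: "even k"
    and adm: "\<And>i. i < k \<Longrightarrow> admissible_piece (V i) (E i) (x i) (y i) (x0 i) (x1 i) (y0 i) (y1 i)"
begin

lemma pf:
  assumes "i < k"
  shows "cubic (V i) (E i)" "graph (V i) (E i)" "has_fulkerson_cover (V i) (E i)"
    "{x i, y i} \<in> E i" "{x i, x0 i} \<in> E i" "{x i, x1 i} \<in> E i" "{y i, y0 i} \<in> E i" "{y i, y1 i} \<in> E i"
    "x0 i \<noteq> x1 i" "x0 i \<noteq> y i" "x1 i \<noteq> y i" "y0 i \<noteq> y1 i" "y0 i \<noteq> x i" "y1 i \<noteq> x i"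
  using adm[OF assms] unfolding admissible_piece_def cubic_def by auto

lemma pf2:
  assumes "i < k"
  shows "x i \<noteq> y i" "x i \<in> V i" "y i \<in> V i" "x0 i \<in> V i" "x1 i \<in> V i" "y0 i \<in> V i" "y1 i \<in> V i"
    "x0 i \<noteq> x i" "x1 i \<noteq> x i" "y0 i \<noteq> y i" "y1 i \<noteq> y i"
  using edge_facts[OF pf(2)[OF assms] pf(4)[OF assms]] edge_facts[OF pf(2)[OF assms] pf(5)[OF assms]]
    edge_facts[OF pf(2)[OF assms] pf(6)[OF assms]] edge_facts[OF pf(2)[OF assms] pf(7)[OF assms]]
    edge_facts[OF pf(2)[OF assms] pf(8)[OF assms]] by auto

lemma edges_x:
  assumes "i < k" shows "{e\<in>E i. x i\<in>e} = {{x i, y i}, {x i, x0 i}, {x i, x1 i}}"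
  apply (rule three_edges[OF pf(1)[OF assms] pf2(2)[OF assms] pf(4,5,6)[OF assms]])
  using pf(9,10,11)[OF assms] pf2(1)[OF assms] by (simp_all add: doubleton_eq_iff)

lemma edges_y:
  assumes "i < k" shows "{e\<in>E i. y i\<in>e} = {{x i, y i}, {y i, y0 i}, {y i, y1 i}}"
  apply (rule three_edges[OF pf(1)[OF assms] pf2(3)[OF assms] pf(4,7,8)[OF assms]])
  using pf(12,13,14)[OF assms] pf2(1)[OF assms] by (auto simp add: doubleton_eq_iff)

lemma nbr_y:
  assumes "i < k" "{u, y i} \<in> E i" "u \<noteq> x i" shows "u = y0 i \<or> u = y1 i"
proof -
  have "{u, y i} \<in> {e\<in>E i. y i\<in>e}" using assms by simp
  thus ?thesis using edges_y[OF assms(1)] assms(3) by (auto simp: doubleton_eq_iff)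
qed

lemma nbr_x:
  assumes "i < k" "{u, x i} \<in> E i" "u \<noteq> y i" shows "u = x0 i \<or> u = x1 i"
proof -
  have "{u, x i} \<in> {e\<in>E i. x i\<in>e}" using assms by simp
  thus ?thesis using edges_x[OF assms(1)] assms(3) by (auto simp: doubleton_eq_iff)
qed

definition N :: "nat \<Rightarrow> nat \<Rightarrow> 'a set set" where
  "N = (SOME N. \<forall>i<k. (\<forall>z<6. perfect_matching (V i) (E i) (N i z))
                    \<and> (\<forall>f\<in>E i. card {z. z<6 \<and> f \<in> N i z} = 2))"

lemma N_ex: "\<exists>N::nat \<Rightarrow> nat \<Rightarrow> 'a set set. \<forall>i<k. (\<forall>z<6. perfect_matching (V i) (E i) (N i z))
                    \<and> (\<forall>f\<in>E i. card {z. z<6 \<and> f \<in> N i z} = 2)"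
proof -
  have "\<forall>i\<in>{..<k}. \<exists>M::nat \<Rightarrow> 'a set set. (\<forall>z<6. perfect_matching (V i) (E i) (M z))
                    \<and> (\<forall>f\<in>E i. card {z. z<6 \<and> f \<in> M z} = 2)"
  proof
    fix i assume "i \<in> {..<k}"
    hence "has_fulkerson_cover (V i) (E i)" using pf(3) by simp
    thus "\<exists>M::nat \<Rightarrow> 'a set set. (\<forall>z<6. perfect_matching (V i) (E i) (M z))
                    \<and> (\<forall>f\<in>E i. card {z. z<6 \<and> f \<in> M z} = 2)"
      unfolding has_fulkerson_cover_def .
  qed
  from bchoice[OF this] obtain F :: "nat \<Rightarrow> nat \<Rightarrow> 'a set set" where F: "\<forall>i\<in>{..<k}. (\<forall>z<6. perfect_matching (V i) (E i) (F i z))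
                    \<and> (\<forall>f\<in>E i. card {z. z<6 \<and> f \<in> F i z} = 2)" by blast
  show ?thesis by (rule exI[of _ F]) (use F in simp)
qed

lemma N_prop:
  assumes "i < k"
  shows "\<forall>z<6. perfect_matching (V i) (E i) (N i z)" "\<forall>f\<in>E i. card {z. z<6 \<and> f \<in> N i z} = 2"
proof -
  have "\<forall>i<k. (\<forall>z<6. perfect_matching (V i) (E i) (N i z))
                    \<and> (\<forall>f\<in>E i. card {z. z<6 \<and> f \<in> N i z} = 2)"
    unfolding N_def by (rule someI_ex[OF N_ex])
  thus "\<forall>z<6. perfect_matching (V i) (E i) (N i z)"
    "\<forall>f\<in>E i. card {z. z<6 \<and> f \<in> N i z} = 2" using assms by blast+
qed

definition oc :: "nat \<Rightarrow> 'a set \<Rightarrow> nat set" where "oc i f = {z. z < 6 \<and> f \<in> N i z}"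

abbreviation "pxy i \<equiv> oc i {x i, y i}"
abbreviation "qx i \<equiv> oc i {x i, x0 i}"
abbreviation "rx i \<equiv> oc i {x i, x1 i}"
abbreviation "qy i \<equiv> oc i {y i, y0 i}"
abbreviation "ry i \<equiv> oc i {y i, y1 i}"

lemma part_x: "i < k \<Longrightarrow> part3 (pxy i) (qx i) (rx i)"
  unfolding oc_def
  apply (rule part_vertex[OF N_prop(1) N_prop(2) pf2(2) edges_x], assumption+)
  using pf(9,10,11)[of i] pf2(1)[of i] by (simp_all add: doubleton_eq_iff)

lemma part_y: "i < k \<Longrightarrow> part3 (pxy i) (qy i) (ry i)"
  unfolding oc_def
  apply (rule part_vertex[OF N_prop(1) N_prop(2) pf2(3) edges_y], assumption+)
  using pf(12,13,14)[of i] pf2(1)[of i] by (auto simp: doubleton_eq_iff)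

end


context Lc begin

definition Ptar :: "nat \<Rightarrow> nat set" where
  "Ptar i = (if i = 1 then {4,5} else if even i then {2,3} else {0,1})"
definition Tset :: "nat \<Rightarrow> nat set" where "Tset j = (if j \<le> 1 then {0,1} else {4,5})"
definition fl :: "nat \<Rightarrow> bool" where "fl i = (qy i = qx i)"
definition gm :: "nat \<Rightarrow> nat" where "gm j = gam fl j"
definition oth :: "nat \<Rightarrow> nat" where "oth j = (if j \<le> 1 then 1 - gm j else 9 - gm j)"
definition pv :: "nat \<Rightarrow> nat" where "pv i = (if i = 0 then k - 1 else i - 1)"
definition req :: "nat \<Rightarrow> (nat \<Rightarrow> nat) \<Rightarrow> bool" where
  "req i \<tau> \<longleftrightarrow> bij_betw \<tau> {..<6} {..<6} \<and> \<tau> ` Ptar i \<subseteq> pxy i \<and> \<tau> (gm (pv i)) \<in> rx i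
     \<and> \<tau> (oth (pv i)) \<in> qx i \<and> \<tau> (gm i) \<in> qy i \<and> \<tau> (oth i) \<in> ry i"
definition tau :: "nat \<Rightarrow> nat \<Rightarrow> nat" where "tau i = (SOME \<tau>. req i \<tau>)"

lemma gm45: "2 \<le> j \<Longrightarrow> gm j = 4 \<or> gm j = 5"
  unfolding gm_def by (rule gam_ge2)

lemma req_ex:
  assumes i: "i < k" shows "\<exists>\<tau>. req i \<tau>"
proof -
  have px: "part3 (pxy i) (qx i) (rx i)" and py: "part3 (pxy i) (qy i) (ry i)"
    using part_x[OF i] part_y[OF i] .
  consider "i = 0" | "i = 1" | "i = 2" | "3 \<le> i" by linarith
  thus ?thesis
  proof cases
    case 1
    have g: "gm (k-1) = 4 \<or> gm (k-1) = 5" using gm45 k4 by simp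
    have l: "distinct [2,3,gm (k-1),9 - gm (k-1),0,1::nat]" "set [2,3,gm (k-1),9 - gm (k-1),0,1::nat] = {..<6}"
      using g by auto
    obtain \<tau> where t: "bij_betw \<tau> {..<6} {..<6}" "\<tau> 2 \<in> pxy i" "\<tau> 3 \<in> pxy i" "\<tau> (gm (k-1)) \<in> rx i"
      "\<tau> (9 - gm (k-1)) \<in> qx i" "\<tau> 0 \<in> qy i" "\<tau> 1 \<in> ry i"
      using LC[OF px py l] by blast
    have kk: "\<not> (k - Suc 0 \<le> Suc 0)" using k4 by simp
    have "req i \<tau>" unfolding req_def using t 1 kk
      by (simp add: Ptar_def pv_def oth_def gm_def gam_01)
    thus ?thesis by blast
  next
    case 2
    let ?b = "if qy i = qx i then 1 else 0::nat" and ?b' = "if qy i = qx i then 0 else 1::nat"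
    have l: "distinct [4,5,0,1,2,3::nat]" "set [4,5,0,1,2,3::nat] = {..<6}" by auto
    obtain \<tau> where t: "bij_betw \<tau> {..<6} {..<6}" "\<tau> 4 \<in> pxy i" "\<tau> 5 \<in> pxy i" "\<tau> 0 \<in> rx i"
      "\<tau> 1 \<in> qx i" "\<tau> ?b \<in> qy i" "\<tau> ?b' \<in> ry i"
      using LE[OF px py l] by (auto split: if_splits)
    have "req i \<tau>" unfolding req_def using t 2
      by (simp add: Ptar_def pv_def oth_def gm_def gam_01 fl_def split: if_splits)
    thus ?thesis by blast
  next
    case 3
    have g: "gm 1 = 0 \<or> gm 1 = 1" by (simp add: gm_def gam_01)
    have l: "distinct [2,3,gm 1,1 - gm 1,4,5::nat]" "set [2,3,gm 1,1 - gm 1,4,5::nat] = {..<6}"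
      using g by auto
    obtain \<tau> where t: "bij_betw \<tau> {..<6} {..<6}" "\<tau> 2 \<in> pxy i" "\<tau> 3 \<in> pxy i" "\<tau> (gm 1) \<in> rx i"
      "\<tau> (1 - gm 1) \<in> qx i" "\<tau> 4 \<in> qy i" "\<tau> 5 \<in> ry i"
      using LC[OF px py l] by blast
    have "req i \<tau>" unfolding req_def using t 3
      by (simp add: Ptar_def pv_def oth_def gm_def gam_01)
    thus ?thesis by blast
  next
    case 4
    have g: "gm (i-1) = 4 \<or> gm (i-1) = 5" using gm45 4 by simp
    have gi: "gm i = (if fl i then 9 - gm (i-1) else gm (i-1))" using gam_step[OF 4] unfolding gm_def .
    define p1 where "p1 = (if even i then 2 else 0::nat)"
    define c1 where "c1 = (if even i then 0 else 2::nat)"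
    have P: "Ptar i = {p1, p1+1}" using 4 unfolding Ptar_def p1_def by auto
    have l: "distinct [p1,p1+1,gm (i-1),9 - gm (i-1),c1,c1+1]"
      "set [p1,p1+1,gm (i-1),9 - gm (i-1),c1,c1+1] = {..<6}"
      using g unfolding p1_def c1_def by auto
    obtain \<tau> where t: "bij_betw \<tau> {..<6} {..<6}" "\<tau> p1 \<in> pxy i" "\<tau> (p1+1) \<in> pxy i"
      "\<tau> (gm (i-1)) \<in> rx i" "\<tau> (9 - gm (i-1)) \<in> qx i"
      "\<tau> (if qy i = qx i then 9 - gm (i-1) else gm (i-1)) \<in> qy i"
      "\<tau> (if qy i = qx i then gm (i-1) else 9 - gm (i-1)) \<in> ry i"
      using LE[OF px py l] by blast
    have o: "oth i = 9 - gm i" "oth (i-1) = 9 - gm (i-1)" "pv i = i - 1" using 4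
      unfolding oth_def pv_def by auto
    have "gm i = (if qy i = qx i then 9 - gm (i-1) else gm (i-1))" using gi unfolding fl_def .
    moreover have "9 - gm i = (if qy i = qx i then gm (i-1) else 9 - gm (i-1))" using gi g unfolding fl_def by auto
    ultimately have "req i \<tau>" unfolding req_def using t o P by simp
    thus ?thesis by blast
  qed
qed

lemma tau_req: "i < k \<Longrightarrow> req i (tau i)"
  unfolding tau_def using req_ex someI_ex by metis

end


context Lc begin

definition nx :: "nat \<Rightarrow> nat" where "nx j = Suc j mod k"

lemma nx_eq: "j < k \<Longrightarrow> nx j = (if Suc j = k then 0 else Suc j)"
proof -
  assume j: "j < k"
  show ?thesis
  proof (cases "Suc j = k")
    case True thus ?thesis unfolding nx_def by simp
  next
    case False hence "Suc j < k" using j by simp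
    thus ?thesis unfolding nx_def using False by simp
  qed
qed
lemma nx_lt: "nx j < k" unfolding nx_def using k4 by simp
lemma nx_neq: "j < k \<Longrightarrow> nx j \<noteq> j" using nx_eq[of j] k4 by auto
lemma pv_lt: "i < k \<Longrightarrow> pv i < k" unfolding pv_def by auto
lemma nx_pv: "i < k \<Longrightarrow> nx (pv i) = i" using nx_eq[OF pv_lt, of i] unfolding pv_def using k4 by auto
lemma pv_nx: "j < k \<Longrightarrow> pv (nx j) = j" using nx_eq[of j] unfolding pv_def using k4 by auto
lemma nx_inv: "j < k \<Longrightarrow> nx j = i \<Longrightarrow> j = pv i"
proof -
  assume "j < k" "nx j = i"
  thus "j = pv i" using pv_nx[of j] by simp
qed

lemma cpath_len: "length (cpath k :: 'a mv list) = k" unfolding cpath_def using k4 by simp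

lemma cpath_nth: "i < k \<Longrightarrow> (cpath k :: 'a mv list) ! i = (if i = 0 then C 1 else if i < k - 1 then Vv (i - 1) else C 0)"
proof -
  assume i: "i < k"
  have c: "(cpath k :: 'a mv list) = C 1 # (map Vv [0..<k-2] @ [C 0])" unfolding cpath_def by simp
  show ?thesis
  proof (cases i)
    case 0 thus ?thesis using c by simp
  next
    case (Suc j)
    hence "(cpath k :: 'a mv list) ! i = (map Vv [0..<k-2] @ [C 0]) ! j" using c by simp
    also have "\<dots> = (if j < k - 2 then Vv j else C 0)" using i Suc by (simp add: nth_append)
    finally show ?thesis using Suc i by auto
  qed
qed

lemma path_edges:
  "{{(cpath k :: 'a mv list) ! i, cpath k ! Suc i} | i. Suc i < length (cpath k :: 'a mv list)}
   = {{C 1, Vv 0}} \<union> {{Vv t, Vv (Suc t)} | t. t + 3 < k} \<union> {{Vv (k - 3), C 0}}"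
  (is "?L = ?R")
proof
  show "?L \<subseteq> ?R"
  proof
    fix e assume "e \<in> ?L"
    then obtain i where i: "Suc i < k" "e = {(cpath k :: 'a mv list) ! i, cpath k ! Suc i}"
      using cpath_len by auto
    show "e \<in> ?R"
    proof (cases "i = 0")
      case True
      have "Suc 0 < k - Suc 0" using k4 by simp
      thus ?thesis using True i k4 cpath_nth[of 0] cpath_nth[of 1] by simp
    next
      case False
      show ?thesis
      proof (cases "Suc i < k - 1")
        case True
        hence "e = {Vv (i - 1), Vv (Suc (i - 1))}" using i False cpath_nth[of i] cpath_nth[of "Suc i"] by simp
        moreover have "i - 1 + 3 < k" using True False by simp
        ultimately show ?thesis by blast
      next
        case False2: False
        have "e = {Vv (i-1), C 0}" using i False False2 cpath_nth[of i] cpath_nth[of "Suc i"] by simp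
        moreover have "i - 1 = k - 3" using i False2 by simp
        ultimately show ?thesis by simp
      qed
    qed
  qed
  show "?R \<subseteq> ?L"
  proof
    fix e assume "e \<in> ?R"
    then consider "e = {C 1, Vv 0}" | t where "t + 3 < k" "e = {Vv t, Vv (Suc t)}" | "e = {Vv (k-3), C 0}"
      by blast
    thus "e \<in> ?L"
    proof cases
      case 1
      have "Suc 0 < k - Suc 0" using k4 by simp
      hence "e = {(cpath k :: 'a mv list) ! 0, cpath k ! Suc 0}" using 1 cpath_nth[of 0] cpath_nth[of 1] k4 by simp
      moreover have "Suc 0 < length (cpath k :: 'a mv list)" using cpath_len k4 by simp
      ultimately show ?thesis by blast
    next
      case (2 t)
      hence "e = {(cpath k :: 'a mv list) ! Suc t, cpath k ! Suc (Suc t)}"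
        using cpath_nth[of "Suc t"] cpath_nth[of "Suc (Suc t)"] by simp
      moreover have "Suc (Suc t) < length (cpath k :: 'a mv list)" using cpath_len 2 by simp
      ultimately show ?thesis by blast
    next
      case 3
      have "e = {(cpath k :: 'a mv list) ! (k-2), cpath k ! Suc (k-2)}"
        using 3 cpath_nth[of "k-2"] cpath_nth[of "Suc (k-2)"] k4
        by (simp add: numeral_3_eq_3 numeral_2_eq_2 Suc_diff_Suc)
      moreover have "Suc (k-2) < length (cpath k :: 'a mv list)" using cpath_len k4 by simp
      ultimately show ?thesis by blast
    qed
  qed
qed

abbreviation "VG \<equiv> constr_vertices k V x y"
abbreviation "EG \<equiv> constr_edges k E x y x0 x1 y0 y1"

lemma EG_iff:
  "e \<in> EG \<longleftrightarrow>
    (\<exists>i u w. e = {Hv i u, Hv i w} \<and> i < k \<and> {u,w} \<in> E i \<and> x i \<notin> {u,w} \<and> y i \<notin> {u,w}) \<or>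
    (\<exists>j<k. e = {A j, Hv j (y0 j)} \<or> e = {A j, Hv (nx j) (x0 (nx j))} \<or>
           e = {B j, Hv j (y1 j)} \<or> e = {B j, Hv (nx j) (x1 (nx j))} \<or> e = {A j, C j} \<or> e = {B j, C j}) \<or>
    e = {C 1, Vv 0} \<or> (\<exists>t. e = {Vv t, Vv (Suc t)} \<and> t + 3 < k) \<or> e = {Vv (k - 3), C 0} \<or>
    (\<exists>i. e = {C i, Vv (i - 2)} \<and> 2 \<le> i \<and> i < k)"
  unfolding constr_edges_def path_edges nx_def[symmetric]
  by (simp only: Un_iff mem_Collect_eq UN_iff insert_iff empty_iff lessThan_iff Bex_def disj_assoc
     simp_thms)

lemma VG_iff:
  "v \<in> VG \<longleftrightarrow> (\<exists>i u. v = Hv i u \<and> i < k \<and> u \<in> V i \<and> u \<noteq> x i \<and> u \<noteq> y i) \<or>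
     (\<exists>j<k. v = A j) \<or> (\<exists>j<k. v = B j) \<or> (\<exists>j<k. v = C j) \<or> (\<exists>t. v = Vv t \<and> t + 2 < k)"
  unfolding constr_vertices_def by auto

end


context Lc begin

definition acond :: "nat \<Rightarrow> nat \<Rightarrow> bool" where
  "acond j m \<longleftrightarrow> {y j, y0 j} \<notin> N j (tau j m) \<and> {x (nx j), x0 (nx j)} \<notin> N (nx j) (tau (nx j) m)"
definition bcond :: "nat \<Rightarrow> nat \<Rightarrow> bool" where
  "bcond j m \<longleftrightarrow> {y j, y1 j} \<notin> N j (tau j m) \<and> {x (nx j), x1 (nx j)} \<notin> N (nx j) (tau (nx j) m)"
definition pcol :: "nat \<Rightarrow> nat set" where "pcol t = (if even t then {2,3} else {0,1})"

definition good :: "nat \<Rightarrow> 'a mv set \<Rightarrow> bool" where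
  "good m e \<longleftrightarrow>
    (\<exists>i u w. i < k \<and> e = {Hv i u, Hv i w} \<and> {u,w} \<in> N i (tau i m)) \<or>
    (\<exists>j<k. e = {A j, Hv j (y0 j)} \<and> {y j, y0 j} \<in> N j (tau j m)) \<or>
    (\<exists>j<k. e = {A j, Hv (nx j) (x0 (nx j))} \<and> {x (nx j), x0 (nx j)} \<in> N (nx j) (tau (nx j) m)) \<or>
    (\<exists>j<k. e = {B j, Hv j (y1 j)} \<and> {y j, y1 j} \<in> N j (tau j m)) \<or>
    (\<exists>j<k. e = {B j, Hv (nx j) (x1 (nx j))} \<and> {x (nx j), x1 (nx j)} \<in> N (nx j) (tau (nx j) m)) \<or>
    (\<exists>j<k. e = {A j, C j} \<and> acond j m) \<or>
    (\<exists>j<k. e = {B j, C j} \<and> bcond j m) \<or>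
    (e = {C 1, Vv 0} \<and> m \<in> {0,1}) \<or>
    (\<exists>t. t + 3 < k \<and> e = {Vv t, Vv (Suc t)} \<and> m \<in> pcol t) \<or>
    (e = {Vv (k - 3), C 0} \<and> m \<in> {0,1}) \<or>
    (\<exists>i. 2 \<le> i \<and> i < k \<and> e = {C i, Vv (i - 2)} \<and> m \<in> {4,5})"

lemma good_int: "i < k \<Longrightarrow> good m {Hv i u, Hv i w} \<longleftrightarrow> {u,w} \<in> N i (tau i m)"
  unfolding good_def by (auto simp: doubleton_eq_iff insert_commute)

lemma good_Ay: "j < k \<Longrightarrow> good m {A j, Hv j (y0 j)} \<longleftrightarrow> {y j, y0 j} \<in> N j (tau j m)"
  unfolding good_def using nx_neq[of j] by (auto simp: doubleton_eq_iff)
lemma good_Ax: "j < k \<Longrightarrow> good m {A j, Hv (nx j) (x0 (nx j))} \<longleftrightarrow> {x (nx j), x0 (nx j)} \<in> N (nx j) (tau (nx j) m)"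
  unfolding good_def using nx_neq[of j] by (auto simp: doubleton_eq_iff)
lemma good_By: "j < k \<Longrightarrow> good m {B j, Hv j (y1 j)} \<longleftrightarrow> {y j, y1 j} \<in> N j (tau j m)"
  unfolding good_def using nx_neq[of j] by (auto simp: doubleton_eq_iff)
lemma good_Bx: "j < k \<Longrightarrow> good m {B j, Hv (nx j) (x1 (nx j))} \<longleftrightarrow> {x (nx j), x1 (nx j)} \<in> N (nx j) (tau (nx j) m)"
  unfolding good_def using nx_neq[of j] by (auto simp: doubleton_eq_iff)
lemma good_AC: "j < k \<Longrightarrow> good m {A j, C j} \<longleftrightarrow> acond j m"
  unfolding good_def by (auto simp: doubleton_eq_iff)
lemma good_BC: "j < k \<Longrightarrow> good m {B j, C j} \<longleftrightarrow> bcond j m"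
  unfolding good_def by (auto simp: doubleton_eq_iff)
lemma good_C1: "good m {C 1, Vv 0} \<longleftrightarrow> m \<in> {0,1}"
  unfolding good_def by (auto simp: doubleton_eq_iff)
lemma good_VV: "t + 3 < k \<Longrightarrow> good m {Vv t, Vv (Suc t)} \<longleftrightarrow> m \<in> pcol t"
  unfolding good_def by (auto simp: doubleton_eq_iff)
lemma good_C0: "good m {Vv (k - 3), C 0} \<longleftrightarrow> m \<in> {0,1}"
  unfolding good_def by (auto simp: doubleton_eq_iff)
lemma good_pend: "2 \<le> i \<Longrightarrow> i < k \<Longrightarrow> good m {C i, Vv (i - 2)} \<longleftrightarrow> m \<in> {4,5}"
  unfolding good_def by (auto simp: doubleton_eq_iff)

end


lemma lessThan6: "{..<6::nat} = {0,1,2,3,4,5}" by auto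

context Lc begin

lemma part_tar: assumes j: "j < k" shows "part3 (Ptar j) (Ptar (nx j)) (Tset j)"
proof -
  have ev: "even k" by (rule kev)
  consider "j = 0" | "j = 1" | "2 \<le> j" "Suc j < k" | "Suc j = k" "2 \<le> j" using j k4 by linarith
  thus ?thesis
  proof cases
    case 1
    have "nx j = 1" using nx_eq[OF j] 1 k4 by simp
    thus ?thesis using 1 unfolding part3_def Ptar_def Tset_def lessThan6 by auto
  next
    case 2
    have "nx j = 2" using nx_eq[OF j] 2 k4 by simp
    thus ?thesis using 2 unfolding part3_def Ptar_def Tset_def lessThan6 by auto
  next
    case 3
    have "nx j = Suc j" using nx_eq[OF j] 3 by simp
    moreover have "Tset j = {4,5}" using 3 unfolding Tset_def by simp
    moreover have "(Ptar j = {2,3} \<and> Ptar (Suc j) = {0,1}) \<or> (Ptar j = {0,1} \<and> Ptar (Suc j) = {2,3})"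
      using 3 unfolding Ptar_def by auto
    ultimately show ?thesis unfolding part3_def lessThan6 by auto
  next
    case 4
    have "nx j = 0" using nx_eq[OF j] 4 by simp
    moreover have "odd j" using 4 ev by (metis even_Suc)
    ultimately show ?thesis using 4 unfolding part3_def Ptar_def Tset_def lessThan6 by auto
  qed
qed

lemma gm_T: "gm j \<in> Tset j \<and> oth j \<in> Tset j \<and> gm j \<noteq> oth j"
proof -
  consider "j = 0" | "j = 1" | "2 \<le> j" by linarith
  thus ?thesis
  proof cases
    case 1 thus ?thesis unfolding Tset_def oth_def gm_def by (simp add: gam_01)
  next
    case 2 thus ?thesis unfolding Tset_def oth_def gm_def by (simp add: gam_01)
  next
    case 3 thus ?thesis using gm45[OF 3] unfolding Tset_def oth_def by auto
  qed
qed

lemma tau_bij: "i < k \<Longrightarrow> bij_betw (tau i) {..<6} {..<6}"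
  using tau_req unfolding req_def by auto
lemma tau_lt: "i < k \<Longrightarrow> m < 6 \<Longrightarrow> tau i m < 6"
proof -
  assume "i < k" "m < 6"
  hence "tau i m \<in> tau i ` {..<6}" by simp
  thus ?thesis using tau_bij[OF \<open>i < k\<close>] unfolding bij_betw_def by simp
qed

lemma inN: "i < k \<Longrightarrow> m < 6 \<Longrightarrow> f \<in> N i (tau i m) \<longleftrightarrow> tau i m \<in> oc i f"
  unfolding oc_def using tau_lt by auto

lemma junc:
  assumes j: "j < k" and m: "m < 6"
  shows "\<not> ({y j, y0 j} \<in> N j (tau j m) \<and> {x (nx j), x0 (nx j)} \<in> N (nx j) (tau (nx j) m))"
    "\<not> ({y j, y1 j} \<in> N j (tau j m) \<and> {x (nx j), x1 (nx j)} \<in> N (nx j) (tau (nx j) m))"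
    "(acond j m \<or> bcond j m \<or> m \<in> Tset j) \<and> \<not> (acond j m \<and> bcond j m)
     \<and> \<not> (acond j m \<and> m \<in> Tset j) \<and> \<not> (bcond j m \<and> m \<in> Tset j)"
proof -
  have j': "nx j < k" by (rule nx_lt)
  have r1: "req j (tau j)" and r2: "req (nx j) (tau (nx j))" using tau_req j j' by auto
  have pv: "pv (nx j) = j" using pv_nx[OF j] .
  have g: "gm j \<in> Tset j" "oth j \<in> Tset j" "gm j \<noteq> oth j" using gm_T by auto
  note J = junction[OF _ _ part_y[OF j] part_x[OF j'] part_tar[OF j] _ _ g _ _ _ _ m,
      of "tau j" "tau (nx j)"]
  have h: "bij_betw (tau j) {..<6} {..<6}" "bij_betw (tau (nx j)) {..<6} {..<6}"
    "tau j ` Ptar j \<subseteq> pxy j" "tau (nx j) ` Ptar (nx j) \<subseteq> pxy (nx j)"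
    "tau j (gm j) \<in> qy j" "tau j (oth j) \<in> ry j" "tau (nx j) (gm j) \<in> rx (nx j)"
    "tau (nx j) (oth j) \<in> qx (nx j)"
    using r1 r2 pv unfolding req_def by auto
  note J2 = J[OF h]
  show "\<not> ({y j, y0 j} \<in> N j (tau j m) \<and> {x (nx j), x0 (nx j)} \<in> N (nx j) (tau (nx j) m))"
    "\<not> ({y j, y1 j} \<in> N j (tau j m) \<and> {x (nx j), x1 (nx j)} \<in> N (nx j) (tau (nx j) m))"
    using J2(1,2) inN[OF j m] inN[OF j' m] by simp_all
  show "(acond j m \<or> bcond j m \<or> m \<in> Tset j) \<and> \<not> (acond j m \<and> bcond j m)
     \<and> \<not> (acond j m \<and> m \<in> Tset j) \<and> \<not> (bcond j m \<and> m \<in> Tset j)"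
    using J2(3) inN[OF j m] inN[OF j' m] unfolding acond_def bcond_def by simp
qed

end


lemma uniq3:
  assumes "\<And>e. Q e \<Longrightarrow> e = ea \<or> e = eb \<or> e = ec" "Q ea" "Q eb" "Q ec"
    "P ea = ca" "P eb = cb" "P ec = cc" "ca \<or> cb \<or> cc" "\<not> (ca \<and> cb)" "\<not> (ca \<and> cc)" "\<not> (cb \<and> cc)"
  shows "\<exists>!e. Q e \<and> P e"
proof -
  have ex: "\<exists>e. Q e \<and> P e" using assms(2-8) by blast
  have un: "\<And>e e'. Q e \<and> P e \<Longrightarrow> Q e' \<and> P e' \<Longrightarrow> e = e'"
  proof -
    fix e e' assume h: "Q e \<and> P e" "Q e' \<and> P e'"
    from assms(1)[of e] assms(1)[of e'] h assms(5-11) show "e = e'" by metis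
  qed
  show ?thesis using ex un by blast
qed

context Lc begin

lemma at_A: "j < k \<Longrightarrow> e \<in> EG \<Longrightarrow> A j \<in> e \<Longrightarrow>
   e = {A j, Hv j (y0 j)} \<or> e = {A j, Hv (nx j) (x0 (nx j))} \<or> e = {A j, C j}"
  unfolding EG_iff by auto
lemma at_B: "j < k \<Longrightarrow> e \<in> EG \<Longrightarrow> B j \<in> e \<Longrightarrow>
   e = {B j, Hv j (y1 j)} \<or> e = {B j, Hv (nx j) (x1 (nx j))} \<or> e = {B j, C j}"
  unfolding EG_iff by auto

lemma EG_Ay: "j < k \<Longrightarrow> {A j, Hv j (y0 j)} \<in> EG"
  unfolding EG_iff by (rule disjI2, rule disjI1, rule exI[of _ j]) simp
lemma EG_Ax: "j < k \<Longrightarrow> {A j, Hv (nx j) (x0 (nx j))} \<in> EG"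
  unfolding EG_iff by (rule disjI2, rule disjI1, rule exI[of _ j]) simp
lemma EG_By: "j < k \<Longrightarrow> {B j, Hv j (y1 j)} \<in> EG"
  unfolding EG_iff by (rule disjI2, rule disjI1, rule exI[of _ j]) simp
lemma EG_Bx: "j < k \<Longrightarrow> {B j, Hv (nx j) (x1 (nx j))} \<in> EG"
  unfolding EG_iff by (rule disjI2, rule disjI1, rule exI[of _ j]) simp
lemma EG_AC: "j < k \<Longrightarrow> {A j, C j} \<in> EG"
  unfolding EG_iff by (rule disjI2, rule disjI1, rule exI[of _ j]) simp
lemma EG_BC: "j < k \<Longrightarrow> {B j, C j} \<in> EG"
  unfolding EG_iff by (rule disjI2, rule disjI1, rule exI[of _ j]) simp
lemma EG_C1: "{C 1, Vv 0} \<in> EG"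
  unfolding EG_iff by (rule disjI2, rule disjI2, rule disjI1) simp
lemma EG_VV: "t + 3 < k \<Longrightarrow> {Vv t, Vv (Suc t)} \<in> EG"
  unfolding EG_iff by (rule disjI2, rule disjI2, rule disjI2, rule disjI1, rule exI[of _ t]) simp
lemma EG_C0: "{Vv (k - 3), C 0} \<in> EG"
  unfolding EG_iff by (rule disjI2, rule disjI2, rule disjI2, rule disjI2, rule disjI1) simp
lemma EG_pend: "2 \<le> i \<Longrightarrow> i < k \<Longrightarrow> {C i, Vv (i - 2)} \<in> EG"
  unfolding EG_iff by (rule disjI2, rule disjI2, rule disjI2, rule disjI2, rule disjI2, rule exI[of _ i]) simp
lemma EG_int: "i < k \<Longrightarrow> {u,w} \<in> E i \<Longrightarrow> x i \<notin> {u,w} \<Longrightarrow> y i \<notin> {u,w} \<Longrightarrow> {Hv i u, Hv i w} \<in> EG"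
  unfolding EG_iff by (rule disjI1, rule exI[of _ i], rule exI[of _ u], rule exI[of _ w]) simp

definition third :: "nat \<Rightarrow> 'a mv set" where
  "third j = (if j = 0 then {Vv (k - 3), C 0} else if j = 1 then {C 1, Vv 0} else {C j, Vv (j - 2)})"

lemma at_C: "j < k \<Longrightarrow> e \<in> EG \<Longrightarrow> C j \<in> e \<Longrightarrow> e = {A j, C j} \<or> e = {B j, C j} \<or> e = third j"
  unfolding EG_iff third_def by auto

lemma third_EG: "j < k \<Longrightarrow> third j \<in> EG"
  unfolding third_def using EG_C0 EG_C1 EG_pend[of j] by auto

lemma good_third: "j < k \<Longrightarrow> good m (third j) \<longleftrightarrow> m \<in> Tset j"
  unfolding third_def Tset_def using good_C0 good_C1 good_pend by auto

definition lft :: "nat \<Rightarrow> 'a mv set" where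
  "lft t = (if t = 0 then {C 1, Vv 0} else {Vv (t - 1), Vv t})"
definition rgt :: "nat \<Rightarrow> 'a mv set" where
  "rgt t = (if t + 3 = k then {Vv (k - 3), C 0} else {Vv t, Vv (Suc t)})"

lemma at_V: "t + 2 < k \<Longrightarrow> e \<in> EG \<Longrightarrow> Vv t \<in> e \<Longrightarrow> e = lft t \<or> e = rgt t \<or> e = {C (t + 2), Vv t}"
  unfolding EG_iff lft_def rgt_def by auto

lemma lft_EG: "t + 2 < k \<Longrightarrow> lft t \<in> EG" unfolding lft_def using EG_C1 EG_VV[of "t - 1"] by auto
lemma rgt_EG: "t + 2 < k \<Longrightarrow> rgt t \<in> EG" unfolding rgt_def using EG_C0 EG_VV[of t] by auto
lemma pend_EG: "t + 2 < k \<Longrightarrow> {C (t + 2), Vv t} \<in> EG" using EG_pend[of "t + 2"] by simp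

lemma good_lft: "t + 2 < k \<Longrightarrow> good m (lft t) \<longleftrightarrow> m \<in> (if t = 0 then {0,1} else pcol (t - 1))"
proof (cases "t = 0")
  case True thus ?thesis unfolding lft_def using good_C1 by simp
next
  case False
  assume t: "t + 2 < k"
  have "t - 1 + 3 < k" "Suc (t - 1) = t" using False t by auto
  thus ?thesis unfolding lft_def using False good_VV[of "t - 1" m] by simp
qed
lemma good_rgt: "t + 2 < k \<Longrightarrow> good m (rgt t) \<longleftrightarrow> m \<in> (if t + 3 = k then {0,1} else pcol t)"
proof (cases "t + 3 = k")
  case True thus ?thesis unfolding rgt_def using good_C0 by simp
next
  case False
  assume t: "t + 2 < k"
  have "t + 3 < k" using False t by auto
  thus ?thesis unfolding rgt_def using False good_VV[of t m] by simp
qed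
lemma good_pend2: "t + 2 < k \<Longrightarrow> good m {C (t + 2), Vv t} \<longleftrightarrow> m \<in> {4,5}"
  using good_pend[of "t + 2" m] by simp

definition M :: "nat \<Rightarrow> 'a mv set set" where "M m = {e \<in> EG. good m e}"

lemma uniq_A: "j < k \<Longrightarrow> m < 6 \<Longrightarrow> \<exists>!e. e \<in> M m \<and> A j \<in> e"
proof -
  assume j: "j < k" and m: "m < 6"
  have "\<exists>!e. (e \<in> EG \<and> A j \<in> e) \<and> good m e"
    apply (rule uniq3[where ea = "{A j, Hv j (y0 j)}" and eb = "{A j, Hv (nx j) (x0 (nx j))}"
          and ec = "{A j, C j}" and P = "good m" and ca = "{y j, y0 j} \<in> N j (tau j m)"
          and cb = "{x (nx j), x0 (nx j)} \<in> N (nx j) (tau (nx j) m)" and cc = "acond j m"])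
    using at_A[OF j] apply blast
    using EG_Ay[OF j] apply blast
    using EG_Ax[OF j] apply blast
    using EG_AC[OF j] apply blast
    using good_Ay[OF j] good_Ax[OF j] good_AC[OF j] junc(1)[OF j m] unfolding acond_def by blast+
  thus ?thesis unfolding M_def by auto
qed

lemma uniq_B: "j < k \<Longrightarrow> m < 6 \<Longrightarrow> \<exists>!e. e \<in> M m \<and> B j \<in> e"
proof -
  assume j: "j < k" and m: "m < 6"
  have "\<exists>!e. (e \<in> EG \<and> B j \<in> e) \<and> good m e"
    apply (rule uniq3[where ea = "{B j, Hv j (y1 j)}" and eb = "{B j, Hv (nx j) (x1 (nx j))}"
          and ec = "{B j, C j}" and P = "good m" and ca = "{y j, y1 j} \<in> N j (tau j m)"
          and cb = "{x (nx j), x1 (nx j)} \<in> N (nx j) (tau (nx j) m)" and cc = "bcond j m"])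
    using at_B[OF j] apply blast
    using EG_By[OF j] apply blast
    using EG_Bx[OF j] apply blast
    using EG_BC[OF j] apply blast
    using good_By[OF j] good_Bx[OF j] good_BC[OF j] junc(2)[OF j m] unfolding bcond_def by blast+
  thus ?thesis unfolding M_def by auto
qed

lemma uniq_C: "j < k \<Longrightarrow> m < 6 \<Longrightarrow> \<exists>!e. e \<in> M m \<and> C j \<in> e"
proof -
  assume j: "j < k" and m: "m < 6"
  have c3: "C j \<in> third j" unfolding third_def by auto
  have "\<exists>!e. (e \<in> EG \<and> C j \<in> e) \<and> good m e"
    apply (rule uniq3[where ea = "{A j, C j}" and eb = "{B j, C j}" and ec = "third j"
       and P = "good m" and ca = "acond j m" and cb = "bcond j m" and cc = "m \<in> Tset j"])
    using at_C[OF j] apply blast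
    using EG_AC[OF j] apply blast
    using EG_BC[OF j] apply blast
    using third_EG[OF j] c3 apply blast
    using good_AC[OF j] good_BC[OF j] good_third[OF j] junc(3)[OF j m] by blast+
  thus ?thesis unfolding M_def by auto
qed

lemma uniq_V: "t + 2 < k \<Longrightarrow> m < 6 \<Longrightarrow> \<exists>!e. e \<in> M m \<and> Vv t \<in> e"
proof -
  assume t: "t + 2 < k" and m: "m < 6"
  have ev: "even k" by (rule kev)
  have cols: "(m \<in> (if t = 0 then {0,1} else pcol (t - 1)) \<or> m \<in> (if t + 3 = k then {0,1} else pcol t)
      \<or> m \<in> {4,5}) \<and> \<not> (m \<in> (if t = 0 then {0,1} else pcol (t - 1)) \<and> m \<in> (if t + 3 = k then {0,1} else pcol t))
      \<and> \<not> (m \<in> (if t = 0 then {0,1} else pcol (t - 1)) \<and> m \<in> {4,5})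
      \<and> \<not> (m \<in> (if t + 3 = k then {0,1} else pcol t) \<and> m \<in> {4,5})"
  proof -
    have m6: "m = 0 \<or> m = 1 \<or> m = 2 \<or> m = 3 \<or> m = 4 \<or> m = 5" using m by auto
    have "((if t = 0 then {0,1} else pcol (t - 1)) = ({0,1}::nat set) \<and> (if t + 3 = k then {0,1} else pcol t) = {2,3})
      \<or> ((if t = 0 then {0,1} else pcol (t - 1)) = ({2,3}::nat set) \<and> (if t + 3 = k then {0,1} else pcol t) = {0,1})"
    proof -
      consider "t = 0" | "t \<noteq> 0" "t + 3 = k" | "t \<noteq> 0" "t + 3 \<noteq> k" by blast
      thus ?thesis
      proof cases
        case 1 hence "t + 3 \<noteq> k" using k4 by simp
        thus ?thesis using 1 unfolding pcol_def by simp
      next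
        case 2
        have "t = k - 3" using 2 by simp
        hence "even (t - 1)" using ev k4 by (simp add: numeral_3_eq_3)
        thus ?thesis using 2 unfolding pcol_def by simp
      next
        case 3
        have "even (t - 1) \<longleftrightarrow> odd t" using 3 by (cases t) auto
        thus ?thesis using 3 unfolding pcol_def by auto
      qed
    qed
    thus ?thesis using m6 by (elim disjE conjE) simp_all
  qed
  have v1: "Vv t \<in> lft t" "Vv t \<in> rgt t" unfolding lft_def rgt_def using t by auto
  have "\<exists>!e. (e \<in> EG \<and> Vv t \<in> e) \<and> good m e"
    apply (rule uniq3[where ea = "lft t" and eb = "rgt t" and ec = "{C (t + 2), Vv t}" and P = "good m"
       and ca = "m \<in> (if t = 0 then {0,1} else pcol (t - 1))"
       and cb = "m \<in> (if t + 3 = k then {0,1} else pcol t)" and cc = "m \<in> {4,5}"])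
    using at_V[OF t] apply blast
    using lft_EG[OF t] v1 apply blast
    using rgt_EG[OF t] v1 apply blast
    using pend_EG[OF t] apply blast
    using good_lft[OF t] good_rgt[OF t] good_pend2[OF t] cols by blast+
  thus ?thesis unfolding M_def by auto
qed

end


context Lc begin

definition lift :: "nat \<Rightarrow> 'a \<Rightarrow> 'a set \<Rightarrow> 'a mv set" where
  "lift i u f = (if f = {u, y i} then (if u = y0 i then {A i, Hv i u} else {B i, Hv i u})
     else if f = {u, x i} then (if u = x0 i then {A (pv i), Hv i u} else {B (pv i), Hv i u})
     else Hv i ` f)"

lemma edge_other: "graph V' E' \<Longrightarrow> f \<in> E' \<Longrightarrow> u \<in> f \<Longrightarrow> \<exists>w. f = {u, w} \<and> w \<noteq> u \<and> w \<in> V'"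
  unfolding graph_def by fastforce

lemma lift1:
  assumes i: "i < k" and u: "u \<noteq> x i" "u \<noteq> y i" and f: "f \<in> E i" "u \<in> f" and m: "m < 6"
  shows "lift i u f \<in> EG \<and> Hv i u \<in> lift i u f \<and> (good m (lift i u f) \<longleftrightarrow> f \<in> N i (tau i m))"
proof -
  obtain w where w: "f = {u, w}" "w \<noteq> u" using edge_other[OF pf(2)[OF i] f] by blast
  have xy: "x i \<noteq> y i" using pf2(1)[OF i] .
  consider "w = y i" | "w = x i" | "w \<noteq> x i" "w \<noteq> y i" by blast
  thus ?thesis
  proof cases
    case 1
    hence fe: "{u, y i} \<in> E i" using w f by simp
    have "u = y0 i \<or> u = y1 i" using nbr_y[OF i fe u(1)] .
    thus ?thesis
    proof
      assume h: "u = y0 i"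
      have l: "lift i u f = {A i, Hv i (y0 i)}" unfolding lift_def using w 1 h by simp
      have "f = {y i, y0 i}" using w 1 h by auto
      thus ?thesis using l EG_Ay[OF i] good_Ay[OF i] h by simp
    next
      assume h: "u = y1 i"
      have "u \<noteq> y0 i" using h pf(12)[OF i] by simp
      hence l: "lift i u f = {B i, Hv i (y1 i)}" unfolding lift_def using w 1 h by simp
      have "f = {y i, y1 i}" using w 1 h by auto
      thus ?thesis using l EG_By[OF i] good_By[OF i] h by simp
    qed
  next
    case 2
    hence fe: "{u, x i} \<in> E i" using w f by simp
    have ne: "f \<noteq> {u, y i}" using w 2 xy u by (auto simp: doubleton_eq_iff)
    have pv: "pv i < k" "nx (pv i) = i" using pv_lt[OF i] nx_pv[OF i] by auto
    have "u = x0 i \<or> u = x1 i" using nbr_x[OF i fe u(2)] .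
    thus ?thesis
    proof
      assume h: "u = x0 i"
      have l: "lift i u f = {A (pv i), Hv (nx (pv i)) (x0 (nx (pv i)))}" unfolding lift_def
        using w 2 h ne pv by simp
      have "f = {x i, x0 i}" using w 2 h by auto
      thus ?thesis using l EG_Ax[OF pv(1)] good_Ax[OF pv(1)] h pv by simp
    next
      assume h: "u = x1 i"
      have "u \<noteq> x0 i" using h pf(9)[OF i] by simp
      hence l: "lift i u f = {B (pv i), Hv (nx (pv i)) (x1 (nx (pv i)))}" unfolding lift_def
        using w 2 h ne pv by simp
      have "f = {x i, x1 i}" using w 2 h by auto
      thus ?thesis using l EG_Bx[OF pv(1)] good_Bx[OF pv(1)] h pv by simp
    qed
  next
    case 3
    have ne: "f \<noteq> {u, y i}" "f \<noteq> {u, x i}" using w 3 u by (auto simp: doubleton_eq_iff)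
    hence l: "lift i u f = {Hv i u, Hv i w}" unfolding lift_def using w by simp
    have "{u, w} \<in> E i" "x i \<notin> {u, w}" "y i \<notin> {u, w}" using w f 3 u by auto
    thus ?thesis using l EG_int[OF i] good_int[OF i] w by simp
  qed
qed

lemma lift2:
  assumes i: "i < k" and u: "u \<noteq> x i" "u \<noteq> y i" and e: "e \<in> EG" "Hv i u \<in> e"
  shows "\<exists>f. f \<in> E i \<and> u \<in> f \<and> e = lift i u f"
proof -
  have xy: "x i \<noteq> y i" using pf2(1)[OF i] .
  have pvi: "pv i < k" "nx (pv i) = i" using pv_lt[OF i] nx_pv[OF i] by auto
  from e(1)[unfolded EG_iff] show ?thesis
  proof (elim disjE)
    assume "\<exists>i' u' w'. e = {Hv i' u', Hv i' w'} \<and> i' < k \<and> {u', w'} \<in> E i' \<and> x i' \<notin> {u', w'} \<and>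
      y i' \<notin> {u', w'}"
    then obtain i' u' w' where h: "e = {Hv i' u', Hv i' w'}" "i' < k" "{u', w'} \<in> E i'" "x i' \<notin> {u', w'}"
      "y i' \<notin> {u', w'}" by blast
    have ii: "i' = i" "u = u' \<or> u = w'" using h(1) e(2) by auto
    have ne: "{u', w'} \<noteq> {u, y i}" "{u', w'} \<noteq> {u, x i}" using h(4,5) ii by auto
    have "lift i u {u', w'} = e" unfolding lift_def using ne h(1) ii by simp
    thus ?thesis using h(3) ii by (intro exI[of _ "{u', w'}"]) auto
  next
    assume "\<exists>j<k. e = {A j, Hv j (y0 j)} \<or> e = {A j, Hv (nx j) (x0 (nx j))} \<or>
           e = {B j, Hv j (y1 j)} \<or> e = {B j, Hv (nx j) (x1 (nx j))} \<or> e = {A j, C j} \<or> e = {B j, C j}"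
    then obtain j where j: "j < k" and h: "e = {A j, Hv j (y0 j)} \<or> e = {A j, Hv (nx j) (x0 (nx j))} \<or>
           e = {B j, Hv j (y1 j)} \<or> e = {B j, Hv (nx j) (x1 (nx j))} \<or> e = {A j, C j} \<or> e = {B j, C j}"
      by blast
    from h show ?thesis
    proof (elim disjE)
      assume h1: "e = {A j, Hv j (y0 j)}"
      hence "j = i" "u = y0 i" using e(2) by auto
      moreover hence "lift i u {u, y i} = e" unfolding lift_def using h1 by simp
      moreover have "{u, y i} \<in> E i" using pf(7)[OF i] \<open>u = y0 i\<close> by (simp add: insert_commute)
      ultimately show ?thesis by blast
    next
      assume h1: "e = {A j, Hv (nx j) (x0 (nx j))}"
      hence "nx j = i" "u = x0 i" using e(2) by auto
      hence jj: "j = pv i" using nx_inv[OF j] by simp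
      have ne: "{u, x i} \<noteq> {u, y i}" using xy by (auto simp: doubleton_eq_iff)
      have "lift i u {u, x i} = e" unfolding lift_def using h1 ne jj \<open>nx j = i\<close> \<open>u = x0 i\<close> by simp
      moreover have "{u, x i} \<in> E i" using pf(5)[OF i] \<open>u = x0 i\<close> by (simp add: insert_commute)
      ultimately show ?thesis by blast
    next
      assume h1: "e = {B j, Hv j (y1 j)}"
      hence "j = i" "u = y1 i" using e(2) by auto
      moreover have "u \<noteq> y0 i" using \<open>u = y1 i\<close> pf(12)[OF i] by simp
      ultimately have "lift i u {u, y i} = e" unfolding lift_def using h1 by simp
      moreover have "{u, y i} \<in> E i" using pf(8)[OF i] \<open>u = y1 i\<close> by (simp add: insert_commute)
      ultimately show ?thesis by blast
    next
      assume h1: "e = {B j, Hv (nx j) (x1 (nx j))}"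
      hence "nx j = i" "u = x1 i" using e(2) by auto
      hence jj: "j = pv i" using nx_inv[OF j] by simp
      have ne: "{u, x i} \<noteq> {u, y i}" using xy by (auto simp: doubleton_eq_iff)
      have "u \<noteq> x0 i" using \<open>u = x1 i\<close> pf(9)[OF i] by simp
      hence "lift i u {u, x i} = e" unfolding lift_def using h1 ne jj \<open>nx j = i\<close> \<open>u = x1 i\<close> by simp
      moreover have "{u, x i} \<in> E i" using pf(6)[OF i] \<open>u = x1 i\<close> by (simp add: insert_commute)
      ultimately show ?thesis by blast
    next
      assume "e = {A j, C j}" thus ?thesis using e(2) by simp
    next
      assume "e = {B j, C j}" thus ?thesis using e(2) by simp
    qed
  next
    assume "e = {C 1, Vv 0}" thus ?thesis using e(2) by simp
  next
    assume "\<exists>t. e = {Vv t, Vv (Suc t)} \<and> t + 3 < k" thus ?thesis using e(2) by auto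
  next
    assume "e = {Vv (k - 3), C 0}" thus ?thesis using e(2) by simp
  next
    assume "\<exists>i'. e = {C i', Vv (i' - 2)} \<and> 2 \<le> i' \<and> i' < k" thus ?thesis using e(2) by auto
  qed
qed

lemma uniq_Hv:
  assumes i: "i < k" and u: "u \<in> V i" "u \<noteq> x i" "u \<noteq> y i" and m: "m < 6"
  shows "\<exists>!e. e \<in> M m \<and> Hv i u \<in> e"
proof -
  have pm: "perfect_matching (V i) (E i) (N i (tau i m))" using N_prop(1)[OF i] tau_lt[OF i m] by blast
  hence ex1: "\<exists>!f. f \<in> N i (tau i m) \<and> u \<in> f" and sub: "N i (tau i m) \<subseteq> E i"
    using u(1) unfolding perfect_matching_def by auto
  then obtain f where f: "f \<in> N i (tau i m)" "u \<in> f" by blast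
  have fE: "f \<in> E i" using f sub by blast
  have L: "lift i u f \<in> M m \<and> Hv i u \<in> lift i u f" using lift1[OF i u(2,3) fE f(2) m] f unfolding M_def by simp
  have U: "\<And>e. e \<in> M m \<Longrightarrow> Hv i u \<in> e \<Longrightarrow> e = lift i u f"
  proof -
    fix e assume e: "e \<in> M m" "Hv i u \<in> e"
    obtain f' where f': "f' \<in> E i" "u \<in> f'" "e = lift i u f'" using lift2[OF i u(2,3) _ e(2)] e(1)
      unfolding M_def by blast
    have "good m e" using e(1) unfolding M_def by simp
    hence "f' \<in> N i (tau i m)" using lift1[OF i u(2,3) f'(1,2) m] f'(3) by simp
    hence "f' = f" using ex1 f f'(2) by blast
    thus "e = lift i u f" using f'(3) by simp
  qed
  show ?thesis using L U by blast
qed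

lemma card_N: "i < k \<Longrightarrow> f \<in> E i \<Longrightarrow> card {m. m < 6 \<and> f \<in> N i (tau i m)} = 2"
proof -
  assume i: "i < k" and f: "f \<in> E i"
  have "{m. m < 6 \<and> f \<in> N i (tau i m)} = {m. m < 6 \<and> tau i m \<in> oc i f}" using inN[OF i] by auto
  also have "card \<dots> = card (oc i f)" by (rule card_pre_bij[OF tau_bij[OF i]]) (auto simp: oc_def)
  also have "\<dots> = 2" using N_prop(2)[OF i] f unfolding oc_def by simp
  finally show ?thesis .
qed

lemma card_cond: "j < k \<Longrightarrow> card {m. m < 6 \<and> acond j m} = 2 \<and> card {m. m < 6 \<and> bcond j m} = 2"
proof -
  assume j: "j < k"
  have j': "nx j < k" by (rule nx_lt)
  have c: "card (qy j) = 2" "card (qx (nx j)) = 2" "card (ry j) = 2" "card (rx (nx j)) = 2"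
    using part_y[OF j] part_x[OF j'] unfolding part3_def by auto
  have s: "qy j \<subseteq> {..<6}" "qx (nx j) \<subseteq> {..<6}" "ry j \<subseteq> {..<6}" "rx (nx j) \<subseteq> {..<6}"
    unfolding oc_def by auto
  have d1: "\<forall>m<6. \<not> (tau j m \<in> qy j \<and> tau (nx j) m \<in> qx (nx j))"
    using junc(1)[OF j] inN[OF j] inN[OF j'] by auto
  have d2: "\<forall>m<6. \<not> (tau j m \<in> ry j \<and> tau (nx j) m \<in> rx (nx j))"
    using junc(2)[OF j] inN[OF j] inN[OF j'] by auto
  have e1: "{m. m < 6 \<and> acond j m} = {m. m < 6 \<and> tau j m \<notin> qy j \<and> tau (nx j) m \<notin> qx (nx j)}"
    unfolding acond_def using inN[OF j] inN[OF j'] by auto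
  have e2: "{m. m < 6 \<and> bcond j m} = {m. m < 6 \<and> tau j m \<notin> ry j \<and> tau (nx j) m \<notin> rx (nx j)}"
    unfolding bcond_def using inN[OF j] inN[OF j'] by auto
  show ?thesis unfolding e1 e2
    using junction_card[OF tau_bij[OF j] tau_bij[OF j'] c(1,2) s(1,2) d1]
      junction_card[OF tau_bij[OF j] tau_bij[OF j'] c(3,4) s(3,4) d2] by simp
qed

lemma card_fix: "card {m::nat. m < 6 \<and> m \<in> {a, b}} = 2" if "a < 6" "b < 6" "a \<noteq> b"
proof -
  have "{m::nat. m < 6 \<and> m \<in> {a, b}} = {a, b}" using that by auto
  thus ?thesis using that by simp
qed

lemma card_edge: "e \<in> EG \<Longrightarrow> card {m. m < 6 \<and> e \<in> M m} = 2"
proof -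
  assume e: "e \<in> EG"
  have eq: "{m. m < 6 \<and> e \<in> M m} = {m. m < 6 \<and> good m e}" unfolding M_def using e by auto
  have "card {m. m < 6 \<and> good m e} = 2"
  using e[unfolded EG_iff]
  proof (elim disjE)
    assume "\<exists>i u w. e = {Hv i u, Hv i w} \<and> i < k \<and> {u, w} \<in> E i \<and> x i \<notin> {u, w} \<and> y i \<notin> {u, w}"
    then obtain i u w where h: "e = {Hv i u, Hv i w}" "i < k" "{u, w} \<in> E i" by blast
    thus ?thesis using good_int[OF h(2)] card_N[OF h(2,3)] by simp
  next
    assume "\<exists>j<k. e = {A j, Hv j (y0 j)} \<or> e = {A j, Hv (nx j) (x0 (nx j))} \<or>
           e = {B j, Hv j (y1 j)} \<or> e = {B j, Hv (nx j) (x1 (nx j))} \<or> e = {A j, C j} \<or> e = {B j, C j}"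
    then obtain j where j: "j < k" and h: "e = {A j, Hv j (y0 j)} \<or> e = {A j, Hv (nx j) (x0 (nx j))} \<or>
           e = {B j, Hv j (y1 j)} \<or> e = {B j, Hv (nx j) (x1 (nx j))} \<or> e = {A j, C j} \<or> e = {B j, C j}"
      by blast
    have j': "nx j < k" by (rule nx_lt)
    from h show ?thesis
    proof (elim disjE)
      assume "e = {A j, Hv j (y0 j)}" thus ?thesis using good_Ay[OF j] card_N[OF j pf(7)[OF j]] by simp
    next
      assume "e = {A j, Hv (nx j) (x0 (nx j))}"
      thus ?thesis using good_Ax[OF j] card_N[OF j' pf(5)[OF j']] by simp
    next
      assume "e = {B j, Hv j (y1 j)}" thus ?thesis using good_By[OF j] card_N[OF j pf(8)[OF j]] by simp
    next
      assume "e = {B j, Hv (nx j) (x1 (nx j))}"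
      thus ?thesis using good_Bx[OF j] card_N[OF j' pf(6)[OF j']] by simp
    next
      assume "e = {A j, C j}" thus ?thesis using good_AC[OF j] card_cond[OF j] by simp
    next
      assume "e = {B j, C j}" thus ?thesis using good_BC[OF j] card_cond[OF j] by simp
    qed
  next
    assume "e = {C 1, Vv 0}" thus ?thesis using good_C1 card_fix[of 0 1] by simp
  next
    assume "\<exists>t. e = {Vv t, Vv (Suc t)} \<and> t + 3 < k"
    then obtain t where h: "e = {Vv t, Vv (Suc t)}" "t + 3 < k" by blast
    thus ?thesis using good_VV[OF h(2)] card_fix[of 0 1] card_fix[of 2 3] unfolding pcol_def by simp
  next
    assume "e = {Vv (k - 3), C 0}" thus ?thesis using good_C0 card_fix[of 0 1] by simp
  next
    assume "\<exists>i. e = {C i, Vv (i - 2)} \<and> 2 \<le> i \<and> i < k"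
    then obtain i where h: "e = {C i, Vv (i - 2)}" "2 \<le> i" "i < k" by blast
    thus ?thesis using good_pend[OF h(2,3)] card_fix[of 4 5] by simp
  qed
  thus ?thesis unfolding eq .
qed

lemma main: "has_fulkerson_cover VG EG"
  unfolding has_fulkerson_cover_def perfect_matching_def
proof (intro exI[of _ M] conjI allI impI ballI)
  fix m :: nat assume m: "m < 6"
  show "M m \<subseteq> EG" unfolding M_def by auto
  fix v assume v: "v \<in> VG"
  from v[unfolded VG_iff] show "\<exists>!e. e \<in> M m \<and> v \<in> e"
  proof (elim disjE exE conjE)
    fix i u assume "v = Hv i u" "i < k" "u \<in> V i" "u \<noteq> x i" "u \<noteq> y i"
    thus ?thesis using uniq_Hv m by simp
  next
    fix j assume "j < k" "v = A j" thus ?thesis using uniq_A m by simp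
  next
    fix j assume "j < k" "v = B j" thus ?thesis using uniq_B m by simp
  next
    fix j assume "j < k" "v = C j" thus ?thesis using uniq_C m by simp
  next
    fix t assume "v = Vv t" "t + 2 < k" thus ?thesis using uniq_V m by simp
  qed
next
  fix e assume "e \<in> EG"
  thus "card {i. i < 6 \<and> e \<in> M i} = 2" by (rule card_edge)
qed

end

theorem theorem3p1:
  fixes k :: nat and \<Gamma> :: "'a mv set \<times> 'a mv set set"
  assumes "k \<ge> 4" and "even k" and "\<Gamma> \<in> M_family k"
  shows "has_fulkerson_cover (fst \<Gamma>) (snd \<Gamma>)"
proof -
  obtain V E x y x0 x1 y0 y1 where G: "\<Gamma> = (constr_vertices k V x y, constr_edges k E x y x0 x1 y0 y1)"
    and a: "\<forall>i<k. admissible_piece (V i) (E i) (x i) (y i) (x0 i) (x1 i) (y0 i) (y1 i)"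
    using assms(3) unfolding M_family_def by blast
  interpret Lc k V E x y x0 x1 y0 y1 using assms(1,2) a by unfold_locales auto
  show ?thesis using main G by simp
qed


end
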